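(* Let $V$ be the $\mathbb Z$-representation of the Kronecker quiver $\mathsf K_2$ (two vertices, two parallel arrows) in which both vertices are represented by $\mathbb Z^2$ and the arrows by $f_1=\mathrm{id}$ and $f_2=\begin{pmatrix}0&1\\-1&0\end{pmatrix}$. Let $\mathfrak o$ be a compact discrete valuation ring of odd residue field cardinality $q$ and $t=q^{-s}$. Then $$\zeta_{V(\mathfrak o)}(s)=\begin{cases}\dfrac{(1+t^2)(1-t^3)}{(1-t)(1-t^2)(1-t^4)(1-qt)(1-qt^3)},&\text{if } q\equiv1\bmod 4,\\[2ex]\dfrac{1+t^3}{(1-t)(1-t^4)(1-qt)(1-qt^3)},&\text{if } q\equiv 3\bmod 4.\end{cases}$$
   Context: $V(\mathfrak o)$ is obtained by tensoring with $\mathfrak o$. A subrepresentation is a pair of submodules $\Lambda_1,\Lambda_2\le\mathfrak o^2$ (at tail and head) with $f_i(\Lambda_1)\subseteq\Lambda_2$ for $i=1,2$, and $\zeta_{V(\mathfrak o)}(s)=\sum|\mathfrak o^2:\Lambda_1|^{-s}|\mathfrak o^2:\Lambda_2|^{-s}$ over such pairs of finite index. *)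

theory Defs
  imports "HOL-Analysis.Analysis"
begin

text \<open>The ring o is modelled as a type 'a of class idom.
  A discrete valuation ring with uniformizer pi: pi is a nonzero non-unit and every
  nonzero element is a unit times a power of pi.\<close>
definition dvr_uniformizer :: "'a::idom \<Rightarrow> bool" where
  "dvr_uniformizer p \<longleftrightarrow> p \<noteq> 0 \<and> \<not> p dvd 1 \<and>
     (\<forall>x. x \<noteq> 0 \<longrightarrow> (\<exists>u n. u dvd 1 \<and> x = u * p ^ n))"

text \<open>Residue field o/m, where m is the maximal ideal of non-units.\<close>
definition residue_field :: "'a::idom itself \<Rightarrow> 'a set set" where
  "residue_field _ = (UNIV::'a set) // {(x, y). \<not> (x - y) dvd 1}"

text \<open>Compact DVR: a DVR with finite residue field which is complete
  with respect to the pi-adic topology.\<close>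
definition compact_dvr :: "'a::idom itself \<Rightarrow> bool" where
  "compact_dvr T \<longleftrightarrow> (\<exists>p::'a. dvr_uniformizer p \<and>
      (\<forall>x::nat \<Rightarrow> 'a. (\<forall>n. p ^ n dvd (x (Suc n) - x n)) \<longrightarrow>
          (\<exists>y. \<forall>n. p ^ n dvd (y - x n)))) \<and>
     finite (residue_field T)"

definition residue_card :: "'a::idom itself \<Rightarrow> nat" where
  "residue_card T = card (residue_field T)"

definition submod2 :: "('a::comm_ring_1 \<times> 'a) set \<Rightarrow> bool" where
  "submod2 L \<longleftrightarrow> (0, 0) \<in> L \<and>
     (\<forall>x\<in>L. \<forall>y\<in>L. (fst x + fst y, snd x + snd y) \<in> L) \<and>
     (\<forall>c. \<forall>x\<in>L. (c * fst x, c * snd x) \<in> L)"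

definition quot2 :: "('a::comm_ring_1 \<times> 'a) set \<Rightarrow> ('a \<times> 'a) set set" where
  "quot2 L = (UNIV::('a \<times> 'a) set) // {(x, y). (fst x - fst y, snd x - snd y) \<in> L}"

definition index2 :: "('a::comm_ring_1 \<times> 'a) set \<Rightarrow> nat" where
  "index2 L = card (quot2 L)"

definition kron_f1 :: "'a::comm_ring_1 \<times> 'a \<Rightarrow> 'a \<times> 'a" where
  "kron_f1 v = v"

definition kron_f2 :: "'a::comm_ring_1 \<times> 'a \<Rightarrow> 'a \<times> 'a" where
  "kron_f2 v = (snd v, - fst v)"

text \<open>Finite-index subrepresentations (L1 at the tail, L2 at the head).\<close>
definition kron_subreps :: "'a::comm_ring_1 itself \<Rightarrow> (('a \<times> 'a) set \<times> ('a \<times> 'a) set) set" where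
  "kron_subreps _ = {(L1, L2). submod2 L1 \<and> submod2 L2 \<and>
      finite (quot2 L1) \<and> finite (quot2 L2) \<and>
      kron_f1 ` L1 \<subseteq> L2 \<and> kron_f2 ` L1 \<subseteq> L2}"

end

theory Submission
  imports Defs "HOL-Algebra.Multiplicative_Group" "HOL-Algebra.QuotRing"
begin

locale dvr =
  fixes p :: "'a::idom"
  assumes unif: "dvr_uniformizer p"
  and compl: "\<forall>x::nat \<Rightarrow> 'a. (\<forall>n. p ^ n dvd (x (Suc n) - x n)) \<longrightarrow> (\<exists>y. \<forall>n. p ^ n dvd (y - x n))"
  and finres: "finite (residue_field TYPE('a))"
begin

lemma p_nz: "p \<noteq> 0" using unif by (simp add: dvr_uniformizer_def)
lemma p_nunit: "\<not> p dvd 1" using unif by (simp add: dvr_uniformizer_def)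
lemma factor: "x \<noteq> 0 \<Longrightarrow> \<exists>u n. u dvd 1 \<and> x = u * p ^ n"
  using unif by (simp add: dvr_uniformizer_def)

lemma unit_iff: "x dvd 1 \<longleftrightarrow> \<not> p dvd x"
proof
  assume "x dvd 1" then show "\<not> p dvd x" using p_nunit dvd_trans by blast
next
  assume a: "\<not> p dvd x"
  then have "x \<noteq> 0" by auto
  then obtain u n where u: "u dvd 1" "x = u * p ^ n" using factor by blast
  have "n = 0"
  proof (rule ccontr)
    assume "n \<noteq> 0" then obtain m where "n = Suc m" by (cases n) auto
    then have "p dvd x" using u by simp
    then show False using a by simp
  qed
  then show "x dvd 1" using u by simp
qed

lemma prime: "p dvd a * b \<Longrightarrow> p dvd a \<or> p dvd b"
proof (rule ccontr)
  assume h: "p dvd a * b" "\<not> (p dvd a \<or> p dvd b)"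
  then have "a dvd 1" "b dvd 1" using unit_iff by auto
  then have "a * b dvd 1 * 1" by (rule mult_dvd_mono)
  then have "a * b dvd 1" by simp
  then show False using h(1) unit_iff by blast
qed

lemma pow_dvd_pow_iff: "p ^ m dvd p ^ n \<longleftrightarrow> m \<le> n"
proof
  assume h: "p ^ m dvd p ^ n"
  show "m \<le> n"
  proof (rule ccontr)
    assume "\<not> m \<le> n"
    then have pm: "p ^ m = p ^ n * p ^ (m - n)" by (simp add: power_add[symmetric])
    obtain k where "p ^ n = p ^ m * k" using h by (auto elim: dvdE)
    then have "p ^ n * 1 = p ^ n * (p ^ (m - n) * k)" using pm by (simp add: mult.assoc)
    then have "p ^ (m - n) * k = 1" using p_nz by (metis mult_left_cancel power_not_zero)
    then have "p ^ (m - n) dvd 1" by (metis dvdI)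
    moreover have "p dvd p ^ (m - n)" using \<open>\<not> m \<le> n\<close> by (simp add: dvd_power)
    ultimately show False using p_nunit dvd_trans by blast
  qed
next
  assume "m \<le> n" then show "p ^ m dvd p ^ n" by (simp add: le_imp_power_dvd)
qed

lemma unit_dvd_iff: assumes "(u::'a) dvd 1" shows "c dvd u * x \<longleftrightarrow> c dvd x"
proof
  assume "c dvd u * x"
  obtain w where w: "1 = u * w" using assms by (auto elim: dvdE)
  have "c dvd w * (u * x)" using \<open>c dvd u * x\<close> by (rule dvd_mult)
  also have "w * (u * x) = x" using w by (simp add: algebra_simps)
  finally show "c dvd x" .
qed simp

lemma unit_pow_dvd_iff: "u dvd 1 \<Longrightarrow> p ^ m dvd u * p ^ n \<longleftrightarrow> m \<le> n"
  using unit_dvd_iff pow_dvd_pow_iff by blast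

lemma all_dvd_zero: assumes "\<And>n. p ^ n dvd x" shows "x = 0"
proof (rule ccontr)
  assume "x \<noteq> 0"
  then obtain u n where u: "u dvd 1" "x = u * p ^ n" using factor by blast
  have "p ^ Suc n dvd u * p ^ n" by (metis assms u(2))
  then have "Suc n \<le> n" using unit_pow_dvd_iff[OF u(1)] by blast
  then show False by simp
qed

lemma dvd_sub_sym: "(c::'a) dvd x - y \<longleftrightarrow> c dvd y - x"
proof -
  have "y - x = - (x - y)" by simp
  then show ?thesis by (simp only: dvd_minus_iff)
qed

definition rrel :: "('a \<times> 'a) set" where "rrel = {(x, y). p dvd x - y}"

lemma res_rel: "{(x, y). \<not> (x - y) dvd (1::'a)} = rrel"
  unfolding rrel_def using unit_iff by auto

lemma residue_field_eq: "residue_field TYPE('a) = UNIV // rrel"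
  unfolding residue_field_def res_rel ..

lemma equiv_rrel: "equiv UNIV rrel"
proof -
  have t: "p dvd x - z" if "p dvd x - y" "p dvd y - z" for x y z
  proof -
    have "x - z = (x - y) + (y - z)" by simp
    then show ?thesis using that by (metis dvd_add)
  qed
  have r: "refl_on UNIV rrel" by (auto simp: refl_on_def rrel_def)
  have s: "sym rrel" unfolding sym_def rrel_def using iffD1[OF dvd_sub_sym] by blast
  have tr: "trans rrel" unfolding trans_def rrel_def using t by blast
  show ?thesis using r s tr by (simp add: equiv_def)
qed

definition qq :: nat where "qq = card (residue_field TYPE('a))"

definition choice :: "'a set \<Rightarrow> 'a" where
  "choice C = (if 0 \<in> C then 0 else (SOME x. x \<in> C))"

definition S :: "'a set" where "S = choice ` residue_field TYPE('a)"

lemma class_mem: "C \<in> UNIV // rrel \<Longrightarrow> choice C \<in> C"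
  unfolding choice_def
  by (metis equiv_rrel in_quotient_imp_non_empty someI_ex ex_in_conv)

lemma zero_S: "0 \<in> S"
proof -
  have "rrel `` {0} \<in> UNIV // rrel" by (simp add: quotientI)
  moreover have "0 \<in> rrel `` {0}" by (simp add: rrel_def)
  ultimately show ?thesis unfolding S_def residue_field_eq choice_def by force
qed

lemma S_exists: "\<exists>s\<in>S. p dvd x - s"
proof -
  let ?C = "rrel `` {x}"
  have C: "?C \<in> UNIV // rrel" by (simp add: quotientI)
  then have "choice ?C \<in> ?C" by (rule class_mem)
  then have "p dvd x - choice ?C" by (simp add: rrel_def)
  moreover have "choice ?C \<in> S" using C unfolding S_def residue_field_eq by blast
  ultimately show ?thesis by blast
qed

lemma S_unique: assumes "s \<in> S" "s' \<in> S" "p dvd s - s'" shows "s = s'"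
proof -
  obtain C where C: "C \<in> UNIV // rrel" "s = choice C" using assms(1) unfolding S_def residue_field_eq by blast
  obtain D where D: "D \<in> UNIV // rrel" "s' = choice D" using assms(2) unfolding S_def residue_field_eq by blast
  have "s \<in> C" "s' \<in> D" using C D class_mem by auto
  moreover have "(s, s') \<in> rrel" using assms(3) by (simp add: rrel_def)
  ultimately have "C = D" using C(1) D(1) equiv_rrel
    by (metis quotient_eq_iff)
  then show ?thesis using C D by simp
qed

lemma choice_inj: "inj_on choice (UNIV // rrel)"
proof (rule inj_onI)
  fix C D assume h: "C \<in> UNIV // rrel" "D \<in> UNIV // rrel" "choice C = choice D"
  then have "choice C \<in> C" "choice C \<in> D" using class_mem by metis+
  moreover have "(choice C, choice C) \<in> rrel" by (simp add: rrel_def)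
  ultimately show "C = D" using h equiv_rrel by (metis quotient_eq_iff)
qed

lemma finite_S: "finite S" unfolding S_def using finres by simp

lemma card_S: "card S = qq"
  unfolding S_def qq_def residue_field_eq using choice_inj by (simp add: card_image)

lemma S_dvd_zero: "s \<in> S \<Longrightarrow> p dvd s \<Longrightarrow> s = 0"
  using S_unique[OF _ zero_S] by simp

fun rep :: "'a list \<Rightarrow> 'a" where
  "rep [] = 0"
| "rep (d # ds) = d + p * rep ds"

lemma digits_exist: "\<exists>ds. set ds \<subseteq> S \<and> length ds = n \<and> p ^ n dvd x - rep ds"
proof (induction n arbitrary: x)
  case 0 then show ?case by (intro exI[of _ "[]"]) simp
next
  case (Suc n)
  obtain s where s: "s \<in> S" "p dvd x - s" using S_exists by blast
  then obtain x' where x': "x - s = p * x'" by (auto elim: dvdE)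
  obtain ds where ds: "set ds \<subseteq> S" "length ds = n" "p ^ n dvd x' - rep ds" using Suc by blast
  have "x - rep (s # ds) = p * (x' - rep ds)" using x' by (simp add: algebra_simps)
  then have "p ^ Suc n dvd x - rep (s # ds)" using ds(3) by (simp add: mult_dvd_mono)
  then show ?case using s ds by (intro exI[of _ "s # ds"]) simp
qed

lemma digits_unique:
  "set ds \<subseteq> S \<Longrightarrow> set es \<subseteq> S \<Longrightarrow> length ds = length es \<Longrightarrow>
   p ^ length ds dvd rep ds - rep es \<Longrightarrow> ds = es"
proof (induction ds arbitrary: es)
  case Nil then show ?case by simp
next
  case (Cons d ds)
  then obtain e es' where es: "es = e # es'" by (cases es) auto
  have eq: "rep (d # ds) - rep es = (d - e) + p * (rep ds - rep es')"
    using es by (simp add: algebra_simps)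
  have "p dvd rep (d # ds) - rep es" using Cons.prems(4)
    by (metis dvd_power dvd_trans length_Cons zero_less_Suc)
  then have "p dvd d - e" using eq by (metis dvd_add_left_iff dvd_triv_left)
  then have de: "d = e" using Cons.prems es S_unique by auto
  have "p * p ^ length ds dvd p * (rep ds - rep es')" using Cons.prems(4) eq de by simp
  then have "p ^ length ds dvd rep ds - rep es'" using p_nz by simp
  then have "ds = es'" using Cons es by auto
  then show ?case using de es by simp
qed

lemma rep_unit: "set (d # ds) \<subseteq> S \<Longrightarrow> d \<noteq> 0 \<Longrightarrow> rep (d # ds) dvd 1"
proof -
  assume h: "set (d # ds) \<subseteq> S" "d \<noteq> 0"
  then have "\<not> p dvd d" using S_dvd_zero by auto
  then have "\<not> p dvd d + p * rep ds" by (metis dvd_add_left_iff dvd_triv_left)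
  then show ?thesis using unit_iff by simp
qed

definition WW :: "'a list set" where "WW = {us. set us \<subseteq> S \<and> (us = [] \<or> hd us \<noteq> 0)}"

lemma rep_WW_unit: "us \<in> WW \<Longrightarrow> us \<noteq> [] \<Longrightarrow> rep us dvd 1"
proof -
  assume h: "us \<in> WW" "us \<noteq> []"
  then obtain d ds where us: "us = d # ds" by (cases us) auto
  then have "set (d # ds) \<subseteq> S" "d \<noteq> 0" using h unfolding WW_def by auto
  then show ?thesis using rep_unit us by blast
qed

lemma card_lists: "card {ds. set ds \<subseteq> S \<and> length ds = n} = qq ^ n"
  using card_lists_length_eq[OF finite_S] card_S by simp

lemma finite_lists: "finite {ds. set ds \<subseteq> S \<and> length ds = n}"
  using finite_lists_length_eq[OF finite_S] by simp

lemma card_WW: "card {us \<in> WW. length us = n} = (if n = 0 then 1 else (qq - 1) * qq ^ (n - 1))"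
proof (cases n)
  case 0
  then have "{us \<in> WW. length us = n} = {[]}" by (auto simp: WW_def)
  then show ?thesis using 0 by simp
next
  case (Suc m)
  have "{us \<in> WW. length us = n} = (\<lambda>(d, ds). d # ds) ` ((S - {0}) \<times> {ds. set ds \<subseteq> S \<and> length ds = m})"
    using Suc by (auto simp: WW_def image_iff length_Suc_conv)
  moreover have "inj_on (\<lambda>(d, ds). d # ds) ((S - {0}) \<times> {ds. set ds \<subseteq> S \<and> length ds = m})"
    by (auto simp: inj_on_def)
  ultimately have "card {us \<in> WW. length us = n} = card (S - {0}) * qq ^ m"
    by (simp add: card_image card_cartesian_product card_lists)
  then show ?thesis using Suc card_S zero_S finite_S by simp
qed

lemma finite_WW: "finite {us \<in> WW. length us = n}"
  by (rule finite_subset[OF _ finite_lists[of n]]) (auto simp: WW_def)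

end

context dvr begin

definition relL :: "('a \<times> 'a) set \<Rightarrow> (('a \<times> 'a) \<times> ('a \<times> 'a)) set" where
  "relL L = {(x, y). (fst x - fst y, snd x - snd y) \<in> L}"

lemma quot2_eq: "quot2 L = UNIV // relL L"
  unfolding quot2_def relL_def ..

lemma submod2_add: "submod2 L \<Longrightarrow> (x1, y1) \<in> L \<Longrightarrow> (x2, y2) \<in> L \<Longrightarrow> (x1 + x2, y1 + y2) \<in> L"
  unfolding submod2_def by force

lemma submod2_smult: "submod2 L \<Longrightarrow> (x, y) \<in> L \<Longrightarrow> (c * x, c * y) \<in> L"
  unfolding submod2_def by force

lemma submod2_zero: "submod2 L \<Longrightarrow> (0, 0) \<in> L"
  unfolding submod2_def by force

lemma submod2_neg: "submod2 L \<Longrightarrow> (x, y) \<in> L \<Longrightarrow> (- x, - y) \<in> L"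
  using submod2_smult[of L x y "-1"] by simp

lemma submod2_diff: "submod2 L \<Longrightarrow> (x1, y1) \<in> L \<Longrightarrow> (x2, y2) \<in> L \<Longrightarrow> (x1 - x2, y1 - y2) \<in> L"
  using submod2_add[of L x1 y1 "- x2" "- y2"] submod2_neg[of L x2 y2] by simp

lemma equiv_relL: assumes "submod2 L" shows "equiv UNIV (relL L)"
proof -
  have r: "refl_on UNIV (relL L)" using submod2_zero[OF assms] by (auto simp: refl_on_def relL_def)
  have s: "sym (relL L)" unfolding sym_def relL_def
  proof (clarify)
    fix a b c d assume "(fst (a, b) - fst (c, d), snd (a, b) - snd (c, d)) \<in> L"
    then have "(a - c, b - d) \<in> L" by simp
    from submod2_neg[OF assms this] show "(fst (c, d) - fst (a, b), snd (c, d) - snd (a, b)) \<in> L" by simp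
  qed
  have t: "trans (relL L)" unfolding trans_def relL_def
  proof (clarify)
    fix a b c d e f
    assume "(fst (a, b) - fst (c, d), snd (a, b) - snd (c, d)) \<in> L"
      "(fst (c, d) - fst (e, f), snd (c, d) - snd (e, f)) \<in> L"
    then have "(a - c, b - d) \<in> L" "(c - e, d - f) \<in> L" by simp_all
    from submod2_add[OF assms this] show "(fst (a, b) - fst (e, f), snd (a, b) - snd (e, f)) \<in> L" by simp
  qed
  show ?thesis using r s t by (simp add: equiv_def)
qed

lemma relL_iff: "((a, b), (c, d)) \<in> relL L \<longleftrightarrow> (a - c, b - d) \<in> L"
  by (simp add: relL_def)

definition lat :: "nat \<Rightarrow> nat \<Rightarrow> 'a list \<Rightarrow> ('a \<times> 'a) set" where
  "lat a b us = {(p ^ a * r, p ^ b * rep us * r + p ^ (b + length us) * s) | r s. True}"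

lemma mem_lat: "(x, y) \<in> lat a b us \<longleftrightarrow>
    (\<exists>r. x = p ^ a * r \<and> p ^ (b + length us) dvd y - p ^ b * rep us * r)"
proof
  assume "(x, y) \<in> lat a b us"
  then obtain r s where "x = p ^ a * r" "y = p ^ b * rep us * r + p ^ (b + length us) * s"
    unfolding lat_def by blast
  then show "\<exists>r. x = p ^ a * r \<and> p ^ (b + length us) dvd y - p ^ b * rep us * r" by auto
next
  assume "\<exists>r. x = p ^ a * r \<and> p ^ (b + length us) dvd y - p ^ b * rep us * r"
  then obtain r where r: "x = p ^ a * r" "p ^ (b + length us) dvd y - p ^ b * rep us * r" by blast
  then obtain s where "y - p ^ b * rep us * r = p ^ (b + length us) * s" by (auto elim: dvdE)
  note r(1) this
  then have "x = p ^ a * r" "y = p ^ b * rep us * r + p ^ (b + length us) * s"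
    by (simp_all add: algebra_simps)
  then show "(x, y) \<in> lat a b us" unfolding lat_def by blast
qed

lemma mem_lat_first: "(p ^ a * r, y) \<in> lat a b us \<longleftrightarrow> p ^ (b + length us) dvd y - p ^ b * rep us * r"
proof -
  have "p ^ a * r = p ^ a * r' \<longleftrightarrow> r = r'" for r' using p_nz by simp
  then show ?thesis unfolding mem_lat by auto
qed

lemma submod_lat: "submod2 (lat a b us)"
  unfolding submod2_def
proof (intro conjI ballI allI)
  show "(0, 0) \<in> lat a b us" unfolding mem_lat by (intro exI[of _ 0]) simp
next
  fix v w assume "v \<in> lat a b us" "w \<in> lat a b us"
  then obtain r1 r2 where r: "fst v = p ^ a * r1" "p ^ (b + length us) dvd snd v - p ^ b * rep us * r1"
     "fst w = p ^ a * r2" "p ^ (b + length us) dvd snd w - p ^ b * rep us * r2"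
    unfolding mem_lat by (metis prod.collapse mem_lat)
  have "snd v + snd w - p ^ b * rep us * (r1 + r2) =
      (snd v - p ^ b * rep us * r1) + (snd w - p ^ b * rep us * r2)" by (simp add: algebra_simps)
  then have "p ^ (b + length us) dvd snd v + snd w - p ^ b * rep us * (r1 + r2)"
    using r by (metis dvd_add)
  moreover have "fst v + fst w = p ^ a * (r1 + r2)" using r by (simp add: algebra_simps)
  ultimately show "(fst v + fst w, snd v + snd w) \<in> lat a b us" unfolding mem_lat by blast
next
  fix c v assume "v \<in> lat a b us"
  then obtain r1 where r: "fst v = p ^ a * r1" "p ^ (b + length us) dvd snd v - p ^ b * rep us * r1"
    unfolding mem_lat by (metis prod.collapse mem_lat)
  have "c * snd v - p ^ b * rep us * (c * r1) = c * (snd v - p ^ b * rep us * r1)" by (simp add: algebra_simps)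
  then have "p ^ (b + length us) dvd c * snd v - p ^ b * rep us * (c * r1)" using r by simp
  moreover have "c * fst v = p ^ a * (c * r1)" using r by (simp add: algebra_simps)
  ultimately show "(c * fst v, c * snd v) \<in> lat a b us" unfolding mem_lat by blast
qed

lemma quot_lat_bij:
  "bij_betw (\<lambda>(d1, d2). relL (lat a b us) `` {(rep d1, rep d2)})
     ({ds. set ds \<subseteq> S \<and> length ds = a} \<times> {ds. set ds \<subseteq> S \<and> length ds = b + length us})
     (quot2 (lat a b us))"
proof -
  let ?L = "lat a b us"
  let ?e = "b + length us"
  have eq: "equiv UNIV (relL ?L)" using equiv_relL submod_lat by blast
  show ?thesis unfolding bij_betw_def
  proof (intro conjI)
    show "inj_on (\<lambda>(d1, d2). relL ?L `` {(rep d1, rep d2)})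
     ({ds. set ds \<subseteq> S \<and> length ds = a} \<times> {ds. set ds \<subseteq> S \<and> length ds = ?e})"
    proof (rule inj_onI)
      fix u v
      assume hu: "u \<in> {ds. set ds \<subseteq> S \<and> length ds = a} \<times> {ds. set ds \<subseteq> S \<and> length ds = ?e}"
        and hv: "v \<in> {ds. set ds \<subseteq> S \<and> length ds = a} \<times> {ds. set ds \<subseteq> S \<and> length ds = ?e}"
        and huv: "(\<lambda>(d1, d2). relL ?L `` {(rep d1, rep d2)}) u = (\<lambda>(d1, d2). relL ?L `` {(rep d1, rep d2)}) v"
      obtain d1 d2 where u: "u = (d1, d2)" by (cases u)
      obtain e1 e2 where v: "v = (e1, e2)" by (cases v)
      have h: "set d1 \<subseteq> S" "length d1 = a" "set d2 \<subseteq> S" "length d2 = ?e"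
        "set e1 \<subseteq> S" "length e1 = a" "set e2 \<subseteq> S" "length e2 = ?e"
        "relL ?L `` {(rep d1, rep d2)} = relL ?L `` {(rep e1, rep e2)}" using hu hv huv u v by auto
      then have "((rep d1, rep d2), (rep e1, rep e2)) \<in> relL ?L"
        using eq by (metis UNIV_I eq_equiv_class_iff)
      then have "(rep d1 - rep e1, rep d2 - rep e2) \<in> ?L" by (simp add: relL_iff)
      then obtain r where r: "rep d1 - rep e1 = p ^ a * r" "p ^ ?e dvd rep d2 - rep e2 - p ^ b * rep us * r"
        unfolding mem_lat by blast
      then have "d1 = e1" using digits_unique[of d1 e1] h by auto
      then have "r = 0" using r(1) p_nz by simp
      then have "p ^ ?e dvd rep d2 - rep e2" using r(2) by simp
      then have "d2 = e2" using digits_unique[of d2 e2] h by auto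
      then show "u = v" using \<open>d1 = e1\<close> u v by simp
    qed
  next
    show "(\<lambda>(d1, d2). relL ?L `` {(rep d1, rep d2)}) `
      ({ds. set ds \<subseteq> S \<and> length ds = a} \<times> {ds. set ds \<subseteq> S \<and> length ds = ?e}) = quot2 ?L"
    proof
      show "(\<lambda>(d1, d2). relL ?L `` {(rep d1, rep d2)}) `
        ({ds. set ds \<subseteq> S \<and> length ds = a} \<times> {ds. set ds \<subseteq> S \<and> length ds = ?e}) \<subseteq> quot2 ?L"
        unfolding quot2_eq by (auto intro: quotientI)
    next
      show "quot2 ?L \<subseteq> (\<lambda>(d1, d2). relL ?L `` {(rep d1, rep d2)}) `
        ({ds. set ds \<subseteq> S \<and> length ds = a} \<times> {ds. set ds \<subseteq> S \<and> length ds = ?e})"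
      proof
        fix X assume "X \<in> quot2 ?L"
        then obtain x y where X: "X = relL ?L `` {(x, y)}" unfolding quot2_eq
          by (auto elim: quotientE)
        obtain d1 where d1: "set d1 \<subseteq> S" "length d1 = a" "p ^ a dvd x - rep d1" using digits_exist by blast
        then obtain r where r: "x - rep d1 = p ^ a * r" by (auto elim: dvdE)
        obtain d2 where d2: "set d2 \<subseteq> S" "length d2 = ?e" "p ^ ?e dvd (y - p ^ b * rep us * r) - rep d2"
          using digits_exist by blast
        have "(x - rep d1, y - rep d2) \<in> ?L" unfolding mem_lat using r d2(3)
          by (intro exI[of _ r]) (simp add: algebra_simps)
        then have "((x, y), (rep d1, rep d2)) \<in> relL ?L" by (simp add: relL_iff)
        then have "X = relL ?L `` {(rep d1, rep d2)}" using X eq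
          by (metis equiv_class_eq)
        then show "X \<in> (\<lambda>(d1, d2). relL ?L `` {(rep d1, rep d2)}) `
          ({ds. set ds \<subseteq> S \<and> length ds = a} \<times> {ds. set ds \<subseteq> S \<and> length ds = ?e})"
          using d1 d2 by force
      qed
    qed
  qed
qed

lemma finite_quot_lat: "finite (quot2 (lat a b us))"
  using bij_betw_finite[OF quot_lat_bij[of a b us]] finite_lists by blast

lemma index_lat: "index2 (lat a b us) = qq ^ (a + b + length us)"
proof -
  have "index2 (lat a b us) = card ({ds. set ds \<subseteq> S \<and> length ds = a} \<times> {ds. set ds \<subseteq> S \<and> length ds = b + length us})"
    unfolding index2_def using bij_betw_same_card[OF quot_lat_bij[of a b us]] by simp
  also have "\<dots> = qq ^ a * qq ^ (b + length us)" by (simp add: card_cartesian_product card_lists)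
  finally show ?thesis by (simp add: power_add)
qed


lemma lat_fst_dvd: "(x, y) \<in> lat a b us \<Longrightarrow> p ^ a dvd x"
  unfolding mem_lat by auto

lemma lat_snd_dvd: assumes "(x, y) \<in> lat a b us" shows "p ^ b dvd y"
proof -
  obtain r where r: "p ^ (b + length us) dvd y - p ^ b * rep us * r" using assms unfolding mem_lat by blast
  have "p ^ b dvd p ^ (b + length us)" by (simp add: le_imp_power_dvd)
  then have "p ^ b dvd y - p ^ b * rep us * r" using r dvd_trans by blast
  moreover have "p ^ b dvd p ^ b * rep us * r" by (simp add: mult.assoc)
  ultimately have "p ^ b dvd (y - p ^ b * rep us * r) + p ^ b * rep us * r" by (rule dvd_add)
  then show ?thesis by simp
qed

lemma lat_gen1: "(p ^ a, p ^ b * rep us) \<in> lat a b us"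
  unfolding mem_lat by (intro exI[of _ 1]) simp

lemma lat_gen2: assumes "us \<in> WW" shows "\<exists>x. (x, p ^ b) \<in> lat a b us"
proof (cases "us = []")
  case True
  then show ?thesis unfolding mem_lat by (intro exI[of _ 0] exI[of _ 0]) simp
next
  case False
  then have "rep us dvd 1" using rep_WW_unit assms by blast
  then obtain w where w: "1 = rep us * w" by (auto elim: dvdE)
  have pw: "p ^ b * rep us * w = p ^ b" using w by (metis mult.assoc mult.right_neutral)
  have "(p ^ a * w, p ^ b) \<in> lat a b us" unfolding mem_lat_first pw by simp
  then show ?thesis by blast
qed

lemma unit_one_minus: "0 < m \<Longrightarrow> (1 - p ^ m) dvd 1"
proof -
  assume m: "0 < m"
  have "p dvd p ^ m" using m by (simp add: dvd_power)
  then have "\<not> p dvd 1 - p ^ m" using p_nunit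
    by (metis diff_add_cancel dvd_add)
  then show ?thesis using unit_iff by blast
qed

lemma lat_zero_fst: assumes "us \<in> WW" shows "(p ^ A, 0) \<in> lat a b us \<longleftrightarrow> a + length us \<le> A"
proof
  assume h: "(p ^ A, 0) \<in> lat a b us"
  then have aA: "a \<le> A" using lat_fst_dvd pow_dvd_pow_iff by blast
  then have pA: "p ^ A = p ^ a * p ^ (A - a)" by (simp add: power_add[symmetric])
  have d: "p ^ (b + length us) dvd 0 - p ^ b * rep us * p ^ (A - a)"
    using h unfolding pA mem_lat_first .
  show "a + length us \<le> A"
  proof (cases "us = []")
    case True then show ?thesis using aA by simp
  next
    case False
    then have u: "rep us dvd 1" using rep_WW_unit assms by blast
    have "p ^ (b + length us) dvd rep us * p ^ (b + (A - a))"
      using d by (simp add: power_add algebra_simps)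
    then have "b + length us \<le> b + (A - a)" using unit_pow_dvd_iff[OF u] by blast
    then show ?thesis using aA by simp
  qed
next
  assume h: "a + length us \<le> A"
  then have pA: "p ^ A = p ^ a * p ^ (A - a)" by (simp add: power_add[symmetric])
  have "p ^ (b + length us) dvd p ^ (b + (A - a))" using h by (simp add: pow_dvd_pow_iff)
  then have "p ^ (b + length us) dvd p ^ b * rep us * p ^ (A - a)"
    by (metis dvd_mult mult.commute mult.left_commute power_add)
  then have "p ^ (b + length us) dvd 0 - p ^ b * rep us * p ^ (A - a)" by simp
  then show "(p ^ A, 0) \<in> lat a b us" unfolding pA mem_lat_first .
qed

lemma lat_zero_snd: "(0, p ^ B) \<in> lat a b us \<longleftrightarrow> b + length us \<le> B"
proof -
  have "(0, p ^ B) \<in> lat a b us \<longleftrightarrow> (p ^ a * 0, p ^ B) \<in> lat a b us" by simp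
  also have "\<dots> \<longleftrightarrow> p ^ (b + length us) dvd p ^ B" unfolding mem_lat_first by simp
  also have "\<dots> \<longleftrightarrow> b + length us \<le> B" by (rule pow_dvd_pow_iff)
  finally show ?thesis .
qed

lemma lat_inj: assumes "us \<in> WW" "us' \<in> WW" "lat a b us = lat a' b' us'"
  shows "a = a' \<and> b = b' \<and> us = us'"
proof -
  have "a' \<le> a" using lat_gen1[of a b us] assms(3) lat_fst_dvd pow_dvd_pow_iff by blast
  moreover have "a \<le> a'" using lat_gen1[of a' b' us'] assms(3) lat_fst_dvd pow_dvd_pow_iff by blast
  ultimately have aa: "a = a'" by simp
  obtain x where "(x, p ^ b) \<in> lat a b us" using lat_gen2 assms(1) by blast
  then have "b' \<le> b" using assms(3) lat_snd_dvd pow_dvd_pow_iff by blast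
  moreover obtain x' where "(x', p ^ b') \<in> lat a' b' us'" using lat_gen2 assms(2) by blast
  then have "b \<le> b'" using assms(3) lat_snd_dvd pow_dvd_pow_iff by blast
  ultimately have bb: "b = b'" by simp
  have "(0, p ^ (b + length us)) \<in> lat a' b' us'" using assms(3) lat_zero_snd by blast
  then have "b' + length us' \<le> b + length us" using lat_zero_snd by blast
  moreover have "(0, p ^ (b' + length us')) \<in> lat a b us" using assms(3) lat_zero_snd by blast
  then have "b + length us \<le> b' + length us'" using lat_zero_snd by blast
  ultimately have ll: "length us = length us'" using bb by simp
  have "(p ^ a * 1, p ^ b * rep us) \<in> lat a' b' us'" using lat_gen1[of a b us] assms(3) by simp
  then have "p ^ (b + length us) dvd p ^ b * rep us - p ^ b * rep us' * 1"
    unfolding aa mem_lat_first bb ll .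
  then have "p ^ b * p ^ length us dvd p ^ b * (rep us - rep us')" by (simp add: power_add algebra_simps)
  then have "p ^ length us dvd rep us - rep us'" using p_nz by simp
  then have "us = us'" using digits_unique[of us us'] assms(1,2) ll by (auto simp: WW_def)
  then show ?thesis using aa bb by simp
qed

lemma unit_scale_mem: assumes "submod2 L" "(u * x, u * y) \<in> L" "u dvd 1" shows "(x, y) \<in> L"
proof -
  obtain w where w: "1 = u * w" using assms(3) by (auto elim: dvdE)
  have "(w * (u * x), w * (u * y)) \<in> L" using submod2_smult assms(1,2) by blast
  moreover have "w * (u * z) = z" for z using w by (metis mult.assoc mult.commute mult_1)
  ultimately show ?thesis by simp
qed

lemma pow_in_lattice:
  assumes L: "submod2 L" "finite (quot2 L)"
  shows "\<exists>k. (p ^ k * v1, p ^ k * v2) \<in> L"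
proof -
  let ?N = "card (quot2 L)"
  let ?f = "\<lambda>k. relL L `` {(p ^ k * v1, p ^ k * v2)}"
  have eq: "equiv UNIV (relL L)" using equiv_relL L(1) by blast
  have sub: "?f ` {0..?N} \<subseteq> quot2 L" unfolding quot2_eq by (auto intro: quotientI)
  have lt: "card {0..?N} > ?N" by simp
  have "\<not> inj_on ?f {0..?N}"
  proof
    assume "inj_on ?f {0..?N}"
    from card_inj_on_le[OF this sub L(2)] lt show False by simp
  qed
  then obtain j k where jk: "j \<in> {0..?N}" "k \<in> {0..?N}" "j \<noteq> k" "?f j = ?f k"
    unfolding inj_on_def by blast
  have sym: "?f j = ?f k \<Longrightarrow> ((p ^ j * v1, p ^ j * v2), (p ^ k * v1, p ^ k * v2)) \<in> relL L" for j k
    using eq by (metis UNIV_I eq_equiv_class_iff)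
  have main: "\<exists>k. (p ^ k * v1, p ^ k * v2) \<in> L" if "j < k" "?f j = ?f k" for j k
  proof -
    have "(p ^ j * v1 - p ^ k * v1, p ^ j * v2 - p ^ k * v2) \<in> L" using sym[OF that(2)] by (simp add: relL_iff)
    moreover have "p ^ k = p ^ j * p ^ (k - j)" using that(1) by (simp add: power_add[symmetric])
    ultimately have "((1 - p ^ (k - j)) * (p ^ j * v1), (1 - p ^ (k - j)) * (p ^ j * v2)) \<in> L"
      by (simp add: algebra_simps)
    moreover have "(1 - p ^ (k - j)) dvd 1" using unit_one_minus[of "k - j"] that(1) by simp
    ultimately have "(p ^ j * v1, p ^ j * v2) \<in> L" using unit_scale_mem L(1) by blast
    then show ?thesis by blast
  qed
  show ?thesis
  proof (cases "j < k")
    case True then show ?thesis using main jk by blast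
  next
    case False then have "k < j" using jk by simp
    then show ?thesis using main jk by metis
  qed
qed



lemma dvd_shift: assumes "(k::'a) dvd a - b" shows "k dvd y - a \<longleftrightarrow> k dvd y - b"
proof -
  have "y - b = (y - a) + (a - b)" by simp
  moreover have "y - a = (y - b) - (a - b)" by simp
  ultimately show ?thesis using assms by (metis dvd_add dvd_diff)
qed

lemma lat_exists:
  assumes L: "submod2 L" "finite (quot2 L)"
  shows "\<exists>a b us. us \<in> WW \<and> L = lat a b us"
proof -
  obtain k1 where "(p ^ k1 * 1, p ^ k1 * 0) \<in> L" using pow_in_lattice[OF L, of 1 0] by blast
  then have ex1: "\<exists>y. (p ^ k1, y) \<in> L" by auto
  define a where "a = (LEAST n. \<exists>y. (p ^ n, y) \<in> L)"
  have "\<exists>n y. (p ^ n, y) \<in> L" using ex1 by blast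
  then have "\<exists>y. (p ^ a, y) \<in> L" unfolding a_def by (rule LeastI_ex)
  then obtain c where c: "(p ^ a, c) \<in> L" by blast
  have amin: "p ^ a dvd x" if xy: "(x, y) \<in> L" for x y
  proof (cases "x = 0")
    case True then show ?thesis by simp
  next
    case False
    then obtain u n where u: "u dvd 1" "x = u * p ^ n" using factor by blast
    obtain w where w: "1 = u * w" using u(1) by (elim dvdE)
    have "(w * x, w * y) \<in> L" using submod2_smult L(1) xy by blast
    moreover have "w * x = p ^ n" using u(2) w by (metis mult.assoc mult.commute mult_1)
    ultimately have "\<exists>y. (p ^ n, y) \<in> L" by auto
    then have "a \<le> n" unfolding a_def by (rule Least_le)
    then have "p ^ a dvd p ^ n" by (simp add: pow_dvd_pow_iff)
    then show ?thesis using u(2) by (simp add: dvd_mult)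
  qed
  obtain k2 where "(p ^ k2 * 0, p ^ k2 * 1) \<in> L" using pow_in_lattice[OF L, of 0 1] by blast
  then have ex2: "(0, p ^ k2) \<in> L" by auto
  define e where "e = (LEAST n. (0, p ^ n) \<in> L)"
  have e0: "(0, p ^ e) \<in> L" unfolding e_def using ex2 by (rule LeastI)
  have emin: "p ^ e dvd y" if xy: "(0, y) \<in> L" for y
  proof (cases "y = 0")
    case True then show ?thesis by simp
  next
    case False
    then obtain u n where u: "u dvd 1" "y = u * p ^ n" using factor by blast
    obtain w where w: "1 = u * w" using u(1) by (elim dvdE)
    have "(w * 0, w * y) \<in> L" using submod2_smult L(1) xy by blast
    moreover have "w * y = p ^ n" using u(2) w by (metis mult.assoc mult.commute mult_1)
    ultimately have "(0, p ^ n) \<in> L" by auto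
    then have "e \<le> n" unfolding e_def by (rule Least_le)
    then have "p ^ e dvd p ^ n" by (simp add: pow_dvd_pow_iff)
    then show ?thesis using u(2) by (simp add: dvd_mult)
  qed
  have memL: "(x, y) \<in> L \<longleftrightarrow> (\<exists>r. x = p ^ a * r \<and> p ^ e dvd y - c * r)" for x y
  proof
    assume xy: "(x, y) \<in> L"
    have "p ^ a dvd x" using amin xy by blast
    then obtain r where r: "x = p ^ a * r" by (elim dvdE)
    have "(r * p ^ a, r * c) \<in> L" using submod2_smult L(1) c by blast
    from submod2_diff[OF L(1) xy this] have "(0, y - r * c) \<in> L" using r by (simp add: mult.commute)
    then have "p ^ e dvd y - c * r" using emin by (simp add: mult.commute)
    then show "\<exists>r. x = p ^ a * r \<and> p ^ e dvd y - c * r" using r by blast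
  next
    assume "\<exists>r. x = p ^ a * r \<and> p ^ e dvd y - c * r"
    then obtain r where r0: "x = p ^ a * r" "p ^ e dvd y - c * r" by blast
    then obtain k where "y - c * r = p ^ e * k" by (elim dvdE)
    note r = r0(1) this
    have "(r * p ^ a, r * c) \<in> L" using submod2_smult L(1) c by blast
    moreover have "(k * 0, k * p ^ e) \<in> L" using submod2_smult L(1) e0 by blast
    ultimately have "(r * p ^ a + k * 0, r * c + k * p ^ e) \<in> L" using submod2_add L(1) by blast
    moreover have "r * c + k * p ^ e = y" using r(2) by (simp add: algebra_simps)
    ultimately show "(x, y) \<in> L" using r(1) by (simp add: mult.commute)
  qed
  show ?thesis
  proof (cases "p ^ e dvd c")
    case True
    have "(x, y) \<in> L \<longleftrightarrow> (x, y) \<in> lat a e []" for x y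
    proof -
      have "p ^ e dvd y - c * r \<longleftrightarrow> p ^ e dvd y - 0" for r
        by (rule dvd_shift) (use True in \<open>simp add: dvd_mult2\<close>)
      then show ?thesis unfolding memL mem_lat by simp
    qed
    note h = this
    have "L = lat a e []"
    proof (rule Set.set_eqI)
      fix v :: "'a \<times> 'a"
      obtain x y where "v = (x, y)" by (cases v)
      then show "v \<in> L \<longleftrightarrow> v \<in> lat a e []" using h by simp
    qed
    moreover have "[] \<in> WW" by (simp add: WW_def)
    ultimately show ?thesis by blast
  next
    case False
    then have "c \<noteq> 0" by auto
    then obtain u b where u: "u dvd 1" "c = u * p ^ b" using factor by blast
    have be: "b < e"
    proof (rule ccontr)
      assume "\<not> b < e"
      then have "p ^ e dvd p ^ b" by (simp add: pow_dvd_pow_iff)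
      then show False using False u(2) by (simp add: dvd_mult)
    qed
    obtain us where us: "set us \<subseteq> S" "length us = e - b" "p ^ (e - b) dvd u - rep us"
      using digits_exist by blast
    have WWus: "us \<in> WW"
    proof -
      obtain d ds where dd: "us = d # ds" using us(2) be by (cases us) auto
      have "d \<noteq> 0"
      proof
        assume "d = 0"
        then have "p dvd rep us" using dd by simp
        moreover have "p dvd u - rep us" using us(3) be
          by (metis dvd_power dvd_trans zero_less_diff)
        ultimately have "p dvd (u - rep us) + rep us" by (rule dvd_add[rotated])
        then show False using u(1) unit_iff by simp
      qed
      then show ?thesis using dd us(1) by (simp add: WW_def)
    qed
    have "(x, y) \<in> L \<longleftrightarrow> (x, y) \<in> lat a b us" for x y
    proof -
      have be': "b + length us = e" using us(2) be by simp
      have "p ^ e dvd c * r - p ^ b * rep us * r" for r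
      proof -
        have "c * r - p ^ b * rep us * r = p ^ b * (u - rep us) * r" using u(2) by (simp add: algebra_simps)
        moreover have "p ^ e dvd p ^ b * (u - rep us)" using us(3) be
          by (metis be' us(2) mult_dvd_mono dvd_refl power_add)
        ultimately show ?thesis by (simp add: dvd_mult2)
      qed
      then have "p ^ e dvd y - c * r \<longleftrightarrow> p ^ e dvd y - p ^ b * rep us * r" for r
        by (rule dvd_shift)
      then show ?thesis unfolding memL mem_lat be' by simp
    qed
    note h = this
    have "L = lat a b us"
    proof (rule Set.set_eqI)
      fix v :: "'a \<times> 'a"
      obtain x y where "v = (x, y)" by (cases v)
      then show "v \<in> L \<longleftrightarrow> v \<in> lat a b us" using h by simp
    qed
    then show ?thesis using WWus by blast
  qed
qed

end

context dvr begin

definition Rg :: "'a ring" where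
  "Rg = \<lparr>carrier = UNIV, monoid.mult = (*), one = 1, zero = 0, add = (+)\<rparr>"

lemma Rg_simps [simp]: "carrier Rg = UNIV" "x \<otimes>\<^bsub>Rg\<^esub> y = x * y" "\<one>\<^bsub>Rg\<^esub> = 1"
  "\<zero>\<^bsub>Rg\<^esub> = 0" "x \<oplus>\<^bsub>Rg\<^esub> y = x + y"
  by (simp_all add: Rg_def)

lemma cring_Rg: "cring Rg"
proof -
  have "\<exists>y. x + y = 0" for x :: 'a
    using add.right_inverse by blast
  thus ?thesis
    unfolding Rg_def using add.right_inverse
    by unfold_locales (auto simp: algebra_simps Units_def)
qed

lemma Rg_pow [simp]: "x [^]\<^bsub>Rg\<^esub> (n::nat) = x ^ n"
  by (induction n) auto

definition Ip :: "'a set" where "Ip = {x. p dvd x}"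

lemma Ip_PIdl: "cgenideal Rg p = Ip"
  unfolding cgenideal_def Ip_def by (auto simp: dvd_def mult.commute)

lemma ideal_Ip: "ideal Ip Rg"
  using cring.cgenideal_ideal[OF cring_Rg, of p] Ip_PIdl by simp

lemma max_Ip: "maximalideal Ip Rg"
proof (rule maximalidealI[OF ideal_Ip])
  show "carrier Rg \<noteq> Ip" using p_nunit by (auto simp: Ip_def)
next
  fix J assume J: "ideal J Rg" "Ip \<subseteq> J" "J \<subseteq> carrier Rg"
  show "J = Ip \<or> J = carrier Rg"
  proof (cases "J = Ip")
    case False
    then obtain x where x: "x \<in> J" "x \<notin> Ip" using J by blast
    then have "x dvd 1" using unit_iff by (simp add: Ip_def)
    then obtain w where w: "1 = x * w" by (elim dvdE)
    have "w \<otimes>\<^bsub>Rg\<^esub> x \<in> J" using ideal.I_l_closed[OF J(1) x(1)] by simp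
    then have "\<one>\<^bsub>Rg\<^esub> \<in> J" using w by (simp add: mult.commute)
    then show ?thesis using ideal.one_imp_carrier[OF J(1)] by blast
  qed simp
qed

definition FF :: "'a set ring" where "FF = Rg Quot Ip"

definition phi :: "'a \<Rightarrow> 'a set" where "phi x = Ip +>\<^bsub>Rg\<^esub> x"

lemma field_FF: "field FF"
  unfolding FF_def using maximalideal.quotient_is_field[OF max_Ip cring_Rg] .

lemma phi_hom: "phi \<in> ring_hom Rg FF"
proof -
  have "(+>\<^bsub>Rg\<^esub>) Ip \<in> ring_hom Rg (Rg Quot Ip)" using ideal.rcos_ring_hom[OF ideal_Ip] .
  moreover have "(+>\<^bsub>Rg\<^esub>) Ip = phi" by (simp add: phi_def fun_eq_iff)
  ultimately show ?thesis by (simp add: FF_def)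
qed

lemma phi_eq_set: "phi x = {y. p dvd y - x}"
  unfolding phi_def a_r_coset_def' Ip_def
  by (auto simp: Rg_def)

lemma phi_eq_iff: "phi x = phi y \<longleftrightarrow> p dvd x - y"
proof
  assume "phi x = phi y"
  then have "x \<in> phi y" using phi_eq_set by auto
  then show "p dvd x - y" by (simp add: phi_eq_set)
next
  assume h: "p dvd x - y"
  have t: "p dvd z - y" if "p dvd z - x" for z
  proof -
    have "z - y = (z - x) + (x - y)" by simp
    then show ?thesis using that h by (metis dvd_add)
  qed
  have t2: "p dvd z - x" if "p dvd z - y" for z
  proof -
    have "z - x = (z - y) - (x - y)" by simp
    then show ?thesis using that h by (metis dvd_diff)
  qed
  show "phi x = phi y" unfolding phi_eq_set using t t2 by blast
qed

lemma carrier_FF: "carrier FF = range phi"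
  unfolding FF_def FactRing_def A_RCOSETS_def' phi_def by auto

lemma carrier_FF_res: "carrier FF = residue_field TYPE('a)"
proof -
  have "rrel `` {x} = phi x" for x
    unfolding phi_eq_set rrel_def using dvd_sub_sym by auto
  then show ?thesis unfolding carrier_FF residue_field_eq quotient_def by auto
qed

lemma card_FF: "card (carrier FF) = qq" and finite_FF: "finite (carrier FF)"
  using carrier_FF_res finres by (simp_all add: qq_def)

lemma phi_mult: "phi (x * y) = phi x \<otimes>\<^bsub>FF\<^esub> phi y"
  using ring_hom_mult[OF phi_hom, of x y] by simp

lemma phi_add: "phi (x + y) = phi x \<oplus>\<^bsub>FF\<^esub> phi y"
  using ring_hom_add[OF phi_hom, of x y] by simp

lemma phi_one: "phi 1 = \<one>\<^bsub>FF\<^esub>"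
  using ring_hom_one[OF phi_hom] by simp

lemma ring_Rg: "ring Rg" using cring_Rg cring.axioms(1) by blast
lemma ring_FF: "ring FF" using field_FF field.is_ring by blast

lemma phi_zero: "phi 0 = \<zero>\<^bsub>FF\<^esub>"
  using ring_hom_zero[OF phi_hom ring_Rg ring_FF] by simp

lemma phi_pow: "phi (x ^ n) = phi x [^]\<^bsub>FF\<^esub> n"
proof (induction n)
  case 0 then show ?case by (simp add: phi_one)
next
  case (Suc n)
  have "phi (x ^ Suc n) = phi (x ^ n * x)" by (simp add: mult.commute)
  also have "\<dots> = phi (x ^ n) \<otimes>\<^bsub>FF\<^esub> phi x" by (rule phi_mult)
  finally show ?case using Suc by simp
qed

lemma two_nondvd: assumes "odd qq" shows "\<not> p dvd 2"
proof
  assume h2: "p dvd 2"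
  let ?G = "add_monoid FF"
  have grp: "group ?G" using abelian_group.a_group ring.is_abelian_group ring_FF by blast
  have c1: "phi 1 \<in> carrier ?G" using carrier_FF by simp
  have "phi 1 [^]\<^bsub>?G\<^esub> (2::nat) = phi 0 \<oplus>\<^bsub>FF\<^esub> phi 1 \<oplus>\<^bsub>FF\<^esub> phi 1"
    by (simp add: numeral_2_eq_2 phi_zero)
  also have "\<dots> = phi 2" by (simp add: phi_add[symmetric])
  also have "\<dots> = phi 0" using h2 phi_eq_iff by simp
  finally have "phi 1 [^]\<^bsub>?G\<^esub> (2::nat) = \<one>\<^bsub>?G\<^esub>" by (simp add: phi_zero)
  then have d2: "group.ord ?G (phi 1) dvd 2" using group.pow_eq_id[OF grp c1] by blast
  have "phi 1 [^]\<^bsub>?G\<^esub> (1::nat) = phi 0 \<oplus>\<^bsub>FF\<^esub> phi 1" by (simp add: phi_zero)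
  also have "\<dots> = phi 1" by (simp add: phi_add[symmetric])
  finally have "phi 1 [^]\<^bsub>?G\<^esub> (1::nat) \<noteq> \<one>\<^bsub>?G\<^esub>"
    using phi_eq_iff[of 1 0] p_nunit by (simp add: phi_zero[symmetric])
  then have n1: "\<not> group.ord ?G (phi 1) dvd 1" using group.pow_eq_id[OF grp c1] by blast
  have "group.ord ?G (phi 1) = 2"
  proof -
    have "group.ord ?G (phi 1) \<le> 2" using d2 by (rule dvd_imp_le) simp
    moreover have "group.ord ?G (phi 1) \<noteq> 0" using d2 by (metis dvd_0_left zero_neq_numeral)
    moreover have "group.ord ?G (phi 1) \<noteq> 1" using n1 by auto
    ultimately show ?thesis by linarith
  qed
  moreover have "group.ord ?G (phi 1) dvd order ?G" using group.ord_dvd_group_order[OF grp c1] .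
  moreover have "order ?G = qq" using card_FF by (simp add: order_def)
  ultimately show False using assms by simp
qed


lemma qq_ge2: "qq \<ge> 2"
proof -
  have "phi 0 \<noteq> phi 1" using phi_eq_iff[of 0 1] p_nunit by (simp add: dvd_sub_sym[of p 0 1])
  moreover have "phi 0 \<in> carrier FF" "phi 1 \<in> carrier FF" using carrier_FF by auto
  ultimately have "card {phi 0, phi 1} \<le> card (carrier FF)"
    by (intro card_mono finite_FF) auto
  then show ?thesis using card_FF \<open>phi 0 \<noteq> phi 1\<close> by simp
qed

lemma mult_group: "group (mult_of FF)"
  using field.field_mult_group[OF field_FF] .

lemma order_M: "order (mult_of FF) = qq - 1"
  using field.order_mult_of[OF field_FF finite_FF] card_FF by (simp add: order_def)

lemma phi_in_M: "\<not> p dvd x \<Longrightarrow> phi x \<in> carrier (mult_of FF)"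
  using phi_eq_iff[of x 0] carrier_FF by (simp add: phi_zero[symmetric])

lemma pow_M: "a [^]\<^bsub>mult_of FF\<^esub> (n::nat) = a [^]\<^bsub>FF\<^esub> n"
  by (simp add: nat_pow_mult_of)

lemma phi_eq_one: "phi x = \<one>\<^bsub>mult_of FF\<^esub> \<longleftrightarrow> p dvd x - 1"
  using phi_eq_iff[of x 1] by (simp add: phi_one)

lemma sqrt_minus_one: assumes "qq mod 4 = 1" shows "\<exists>x. p dvd x ^ 2 + 1"
proof -
  let ?M = "mult_of FF"
  obtain g where g: "g \<in> carrier ?M" "carrier ?M = {g [^]\<^bsub>FF\<^esub> i | i. i \<in> (UNIV::nat set)}"
    using field.finite_field_mult_group_has_gen[OF field_FF finite_FF] by blast
  have finM: "finite (carrier ?M)" using finite_FF by simp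
  have ord1: "group.ord ?M g \<ge> 1" using group.ord_ge_1[OF mult_group finM g(1)] .
  have "carrier ?M = {g [^]\<^bsub>?M\<^esub> i | i. i \<in> (UNIV::nat set)}" using g(2) by (simp add: pow_M)
  also have "\<dots> = {g [^]\<^bsub>?M\<^esub> i | i. i \<in> {0 .. group.ord ?M g - 1}}"
    using group.ord_elems[OF mult_group finM g(1)] .
  also have "\<dots> = (\<lambda>i. g [^]\<^bsub>?M\<^esub> i) ` {0 .. group.ord ?M g - 1}" by auto
  finally have "card (carrier ?M) \<le> card {0 .. group.ord ?M g - 1}"
    by (metis card_image_le finite_atLeastAtMost)
  then have le1: "qq - 1 \<le> group.ord ?M g" using order_M ord1 by (simp add: order_def)
  have "group.ord ?M g dvd qq - 1" using group.ord_dvd_group_order[OF mult_group g(1)] order_M by simp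
  moreover have "qq - 1 > 0" using qq_ge2 by simp
  ultimately have "group.ord ?M g \<le> qq - 1" by (simp add: dvd_imp_le)
  then have ordg: "group.ord ?M g = qq - 1" using le1 by simp
  obtain x0 where x0: "g = phi x0" using g(1) carrier_FF by auto
  define k where "k = (qq - 1) div 4"
  have qk: "qq - 1 = 4 * k" using assms qq_ge2 unfolding k_def by presburger
  have kpos: "k > 0" using qk qq_ge2 assms by (cases k) auto
  define y where "y = x0 ^ (2 * k)"
  have "phi (y ^ 2) = g [^]\<^bsub>?M\<^esub> (qq - 1)"
    unfolding y_def x0 pow_M phi_pow[symmetric] qk by (simp add: power_mult[symmetric] mult.commute)
  also have "\<dots> = \<one>\<^bsub>?M\<^esub>" using group.pow_order_eq_1[OF mult_group g(1)] order_M by simp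
  finally have d1: "p dvd y ^ 2 - 1" using phi_eq_one by blast
  have "phi y = g [^]\<^bsub>?M\<^esub> (2 * k)" unfolding y_def x0 pow_M phi_pow ..
  moreover have "\<not> group.ord ?M g dvd 2 * k"
  proof
    assume "group.ord ?M g dvd 2 * k"
    then have "4 * k dvd 2 * k" using ordg qk by simp
    then have "4 * k \<le> 2 * k" by (rule dvd_imp_le) (use kpos in simp)
    then show False using kpos by simp
  qed
  ultimately have "phi y \<noteq> \<one>\<^bsub>?M\<^esub>" using group.pow_eq_id[OF mult_group g(1)] by simp
  then have n1: "\<not> p dvd y - 1" using phi_eq_one by blast
  have "y ^ 2 - 1 = (y - 1) * (y + 1)" by (simp add: algebra_simps power2_eq_square)
  then have "p dvd y + 1" using d1 n1 prime by metis
  moreover have "y = (x0 ^ k) ^ 2" unfolding y_def by (simp add: power_mult[symmetric] mult.commute)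
  ultimately show ?thesis by blast
qed

lemma no_sqrt_minus_one: assumes "odd qq" "qq mod 4 \<noteq> 1" shows "\<not> p dvd x ^ 2 + 1"
proof
  let ?M = "mult_of FF"
  assume h: "p dvd x ^ 2 + 1"
  have "\<not> p dvd x"
  proof
    assume "p dvd x"
    then have "p dvd x ^ 2" by (simp add: power2_eq_square)
    then have "p dvd (x ^ 2 + 1) - x ^ 2" using h by (rule dvd_diff[rotated])
    then show False using p_nunit by simp
  qed
  then have xM: "phi x \<in> carrier ?M" by (rule phi_in_M)
  have "x ^ 4 - 1 = (x ^ 2 + 1) * (x ^ 2 - 1)" by (simp add: algebra_simps power2_eq_square power4_eq_xxxx)
  then have "p dvd x ^ 4 - 1" using h by simp
  then have "phi (x ^ 4) = \<one>\<^bsub>?M\<^esub>" using phi_eq_one by blast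
  then have "phi x [^]\<^bsub>?M\<^esub> (4::nat) = \<one>\<^bsub>?M\<^esub>" by (simp add: pow_M phi_pow)
  then have d4: "group.ord ?M (phi x) dvd 4" using group.pow_eq_id[OF mult_group xM] by blast
  have "\<not> p dvd x ^ 2 - 1"
  proof
    assume "p dvd x ^ 2 - 1"
    then have "p dvd (x ^ 2 + 1) - (x ^ 2 - 1)" using h by (rule dvd_diff[rotated])
    then show False using two_nondvd assms(1) by simp
  qed
  then have "phi (x ^ 2) \<noteq> \<one>\<^bsub>?M\<^esub>" using phi_eq_one by blast
  then have "phi x [^]\<^bsub>?M\<^esub> (2::nat) \<noteq> \<one>\<^bsub>?M\<^esub>" by (simp add: pow_M phi_pow)
  then have n2: "\<not> group.ord ?M (phi x) dvd 2" using group.pow_eq_id[OF mult_group xM] by blast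
  have o4: "group.ord ?M (phi x) = 4"
  proof -
    have "group.ord ?M (phi x) \<le> 4" using d4 by (rule dvd_imp_le) simp
    moreover have "group.ord ?M (phi x) \<noteq> 0" using d4 by (metis dvd_0_left zero_neq_numeral)
    moreover have "group.ord ?M (phi x) \<noteq> 1" using n2 by auto
    moreover have "group.ord ?M (phi x) \<noteq> 2" using n2 by auto
    moreover have "group.ord ?M (phi x) \<noteq> 3" using d4 by auto
    ultimately show ?thesis by linarith
  qed
  have "group.ord ?M (phi x) dvd qq - 1" using group.ord_dvd_group_order[OF mult_group xM] order_M by simp
  then have "4 dvd qq - 1" using o4 by simp
  then show False using assms qq_ge2 by presburger
qed

end

context dvr begin

lemma pow_dvd_Suc: assumes "p ^ Suc n dvd z" shows "p ^ n dvd z"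
proof -
  have "p ^ n dvd p ^ Suc n" by (simp add: pow_dvd_pow_iff)
  then show ?thesis using assms by (rule dvd_trans)
qed

lemma hensel_step:
  assumes "odd qq" "p ^ Suc n dvd x ^ 2 + 1"
  shows "\<exists>x'. p ^ Suc n dvd x' - x \<and> p ^ Suc (Suc n) dvd x' ^ 2 + 1"
proof -
  obtain c where c: "x ^ 2 + 1 = p ^ Suc n * c" using assms(2) by (elim dvdE)
  have "\<not> p dvd x"
  proof
    assume "p dvd x"
    then have "p dvd x ^ 2" by (simp add: power2_eq_square)
    moreover have "p dvd x ^ 2 + 1" using assms(2) by (metis dvd_power dvd_trans zero_less_Suc)
    ultimately have "p dvd (x ^ 2 + 1) - x ^ 2" by (rule dvd_diff[rotated])
    then show False using p_nunit by simp
  qed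
  moreover have "\<not> p dvd 2" using two_nondvd assms(1) .
  ultimately have "\<not> p dvd 2 * x" using prime by blast
  then have "(2 * x) dvd 1" using unit_iff by blast
  then obtain w where w: "1 = 2 * x * w" by (elim dvdE)
  define x' where "x' = x - p ^ Suc n * c * w"
  have "x' - x = p ^ Suc n * (- c * w)" unfolding x'_def by (simp add: algebra_simps)
  then have d1: "p ^ Suc n dvd x' - x" by simp
  have "x' ^ 2 + 1 = (x ^ 2 + 1) - p ^ Suc n * c * (2 * x * w) + (p ^ Suc n * c * w) ^ 2"
    unfolding x'_def by (simp add: algebra_simps power2_eq_square)
  also have "\<dots> = p ^ Suc n * p ^ Suc n * (c * w) ^ 2"
    unfolding c w[symmetric] by (simp add: algebra_simps power2_eq_square)
  finally have e: "x' ^ 2 + 1 = p ^ Suc (Suc n) * (p ^ n * (c * w) ^ 2)"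
    by (simp add: algebra_simps)
  show ?thesis using d1 e by (intro exI[of _ x']) simp
qed

lemma exists_i: assumes "odd qq" "qq mod 4 = 1" shows "\<exists>i::'a. i ^ 2 + 1 = 0"
proof -
  obtain x0 where x0: "p dvd x0 ^ 2 + 1" using sqrt_minus_one assms(2) by blast
  define P where "P n x x' \<longleftrightarrow> p ^ Suc n dvd x' - x \<and> p ^ Suc (Suc n) dvd x' ^ 2 + 1" for n x x'
  define sq where "sq = rec_nat x0 (\<lambda>n x. SOME x'. P n x x')"
  have sq0: "sq 0 = x0" and sqS: "sq (Suc n) = (SOME x'. P n (sq n) x')" for n
    by (simp_all add: sq_def)
  have inv: "p ^ Suc n dvd (sq n) ^ 2 + 1" for n
  proof (induction n)
    case 0 then show ?case using x0 sq0 by simp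
  next
    case (Suc n)
    have "\<exists>x'. P n (sq n) x'" unfolding P_def using hensel_step[OF assms(1) Suc] .
    then have "P n (sq n) (sq (Suc n))" unfolding sqS by (rule someI_ex)
    then show ?case unfolding P_def by simp
  qed
  have step: "p ^ n dvd sq (Suc n) - sq n" for n
  proof -
    have "\<exists>x'. P n (sq n) x'" unfolding P_def using hensel_step[OF assms(1) inv] .
    then have "P n (sq n) (sq (Suc n))" unfolding sqS by (rule someI_ex)
    then have "p ^ Suc n dvd sq (Suc n) - sq n" unfolding P_def by simp
    then show ?thesis by (rule pow_dvd_Suc)
  qed
  obtain y where y: "\<And>n. p ^ n dvd y - sq n" using compl step by blast
  have "p ^ n dvd y ^ 2 + 1" for n
  proof -
    have "y ^ 2 + 1 = (y - sq n) * (y + sq n) + ((sq n) ^ 2 + 1)" by (simp add: algebra_simps power2_eq_square)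
    moreover have "p ^ n dvd (y - sq n) * (y + sq n)" using y by simp
    moreover have "p ^ n dvd (sq n) ^ 2 + 1" using inv[of n] by (rule pow_dvd_Suc)
    ultimately show ?thesis by (metis dvd_add)
  qed
  then have "y ^ 2 + 1 = 0" by (rule all_dvd_zero)
  then show ?thesis by blast
qed

lemma block_mem: assumes "submod2 L" "(p ^ A, 0) \<in> L" "(0, p ^ B) \<in> L" "p ^ A dvd x" "p ^ B dvd y"
  shows "(x, y) \<in> L"
proof -
  obtain x' where x': "x = p ^ A * x'" using assms(4) by (elim dvdE)
  obtain y' where y': "y = p ^ B * y'" using assms(5) by (elim dvdE)
  have "(x' * p ^ A, x' * 0) \<in> L" using submod2_smult assms(1,2) by blast
  moreover have "(y' * 0, y' * p ^ B) \<in> L" using submod2_smult assms(1,3) by blast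
  ultimately have "(x' * p ^ A + y' * 0, x' * 0 + y' * p ^ B) \<in> L" using submod2_add assms(1) by blast
  then show ?thesis using x' y' by (simp add: mult.commute)
qed

lemma kron3:
  assumes q: "odd qq" "qq mod 4 \<noteq> 1" and W: "us1 \<in> WW" "us2 \<in> WW"
  shows "(kron_f1 ` lat a1 b1 us1 \<subseteq> lat a2 b2 us2 \<and> kron_f2 ` lat a1 b1 us1 \<subseteq> lat a2 b2 us2) \<longleftrightarrow>
         (a2 + length us2 \<le> min a1 b1 \<and> b2 + length us2 \<le> min a1 b1)"
proof
  let ?m = "min a1 b1"
  let ?L2 = "lat a2 b2 us2"
  assume h: "kron_f1 ` lat a1 b1 us1 \<subseteq> ?L2 \<and> kron_f2 ` lat a1 b1 us1 \<subseteq> ?L2"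
  have "\<exists>X Y. (p ^ ?m * X, p ^ ?m * Y) \<in> lat a1 b1 us1 \<and> \<not> p dvd X ^ 2 + Y ^ 2"
  proof (cases "a1 \<le> b1")
    case True
    define Y where "Y = p ^ (b1 - a1) * rep us1"
    have "p ^ b1 * rep us1 = p ^ a1 * Y" unfolding Y_def using True
      by (simp add: mult.assoc[symmetric] power_add[symmetric])
    then have "(p ^ ?m * 1, p ^ ?m * Y) \<in> lat a1 b1 us1" using lat_gen1[of a1 b1 us1] True by simp
    moreover have "\<not> p dvd 1 ^ 2 + Y ^ 2" using no_sqrt_minus_one[OF q, of Y] by (simp add: add.commute)
    ultimately show ?thesis by blast
  next
    case False
    obtain x where x: "(x, p ^ b1) \<in> lat a1 b1 us1" using lat_gen2 W(1) by blast
    then have "p ^ a1 dvd x" by (rule lat_fst_dvd)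
    then obtain r where "x = p ^ a1 * r" by (elim dvdE)
    moreover have "p ^ a1 = p ^ b1 * p ^ (a1 - b1)" using False by (simp add: power_add[symmetric])
    ultimately have "x = p ^ ?m * (p ^ (a1 - b1) * r)" using False by (simp add: mult.assoc)
    then have "(p ^ ?m * (p ^ (a1 - b1) * r), p ^ ?m * 1) \<in> lat a1 b1 us1" using x False by simp
    moreover have "\<not> p dvd (p ^ (a1 - b1) * r) ^ 2 + 1 ^ 2" using no_sqrt_minus_one[OF q] by simp
    ultimately show ?thesis by blast
  qed
  then obtain X Y where XY: "(p ^ ?m * X, p ^ ?m * Y) \<in> lat a1 b1 us1" "\<not> p dvd X ^ 2 + Y ^ 2" by blast
  have L2: "submod2 ?L2" by (rule submod_lat)
  have m1: "(p ^ ?m * X, p ^ ?m * Y) \<in> ?L2" using h XY(1) by (force simp: kron_f1_def)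
  have m2: "(p ^ ?m * Y, - (p ^ ?m * X)) \<in> ?L2" using h XY(1) by (force simp: kron_f2_def)
  have N: "(X ^ 2 + Y ^ 2) dvd 1" using XY(2) unit_iff by blast
  have "(X * (p ^ ?m * X) + Y * (p ^ ?m * Y), X * (p ^ ?m * Y) + Y * (- (p ^ ?m * X))) \<in> ?L2"
    using submod2_add[OF L2 submod2_smult[OF L2 m1] submod2_smult[OF L2 m2]] .
  then have "((X ^ 2 + Y ^ 2) * p ^ ?m, (X ^ 2 + Y ^ 2) * 0) \<in> ?L2"
    by (simp add: algebra_simps power2_eq_square)
  then have "(p ^ ?m, 0) \<in> ?L2" using unit_scale_mem[OF L2 _ N] by blast
  then have c1: "a2 + length us2 \<le> ?m" using lat_zero_fst W(2) by blast
  have "(Y * (p ^ ?m * X) - X * (p ^ ?m * Y), Y * (p ^ ?m * Y) - X * (- (p ^ ?m * X))) \<in> ?L2"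
    using submod2_diff[OF L2 submod2_smult[OF L2 m1] submod2_smult[OF L2 m2]] .
  then have "((X ^ 2 + Y ^ 2) * 0, (X ^ 2 + Y ^ 2) * p ^ ?m) \<in> ?L2"
    by (simp add: algebra_simps power2_eq_square)
  then have "(0, p ^ ?m) \<in> ?L2" using unit_scale_mem[OF L2 _ N] by blast
  then have c2: "b2 + length us2 \<le> ?m" using lat_zero_snd by blast
  show "a2 + length us2 \<le> ?m \<and> b2 + length us2 \<le> ?m" using c1 c2 by simp
next
  let ?m = "min a1 b1"
  let ?L2 = "lat a2 b2 us2"
  assume h: "a2 + length us2 \<le> ?m \<and> b2 + length us2 \<le> ?m"
  have L2: "submod2 ?L2" by (rule submod_lat)
  have z1: "(p ^ ?m, 0) \<in> ?L2" using lat_zero_fst W(2) h by blast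
  have z2: "(0, p ^ ?m) \<in> ?L2" using lat_zero_snd h by blast
  have inL2: "(x', y') \<in> ?L2" if "p ^ ?m dvd x'" "p ^ ?m dvd y'" for x' y'
    using block_mem[OF L2 z1 z2 that] .
  have dv: "p ^ ?m dvd x \<and> p ^ ?m dvd y" if "(x, y) \<in> lat a1 b1 us1" for x y
  proof -
    have "p ^ a1 dvd x" "p ^ b1 dvd y" using lat_fst_dvd lat_snd_dvd that by blast+
    moreover have "p ^ ?m dvd p ^ a1" "p ^ ?m dvd p ^ b1" by (simp_all add: pow_dvd_pow_iff)
    ultimately show ?thesis using dvd_trans by blast
  qed
  show "kron_f1 ` lat a1 b1 us1 \<subseteq> ?L2 \<and> kron_f2 ` lat a1 b1 us1 \<subseteq> ?L2"
  proof (intro conjI subsetI)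
    fix v assume "v \<in> kron_f1 ` lat a1 b1 us1"
    then have "v \<in> lat a1 b1 us1" by (simp add: kron_f1_def)
    then obtain x y where "(x, y) \<in> lat a1 b1 us1" "v = (x, y)" by (metis prod.collapse)
    then show "v \<in> ?L2" using dv inL2 by blast
  next
    fix v assume "v \<in> kron_f2 ` lat a1 b1 us1"
    then obtain x y where xy: "(x, y) \<in> lat a1 b1 us1" "v = (y, - x)" by (auto simp: kron_f2_def)
    then show "v \<in> ?L2" using dv inL2 by (metis dvd_minus_iff)
  qed
qed


lemma quot2_transport:
  fixes F G :: "'a \<times> 'a \<Rightarrow> 'a \<times> 'a"
  assumes GF: "\<And>v. G (F v) = v" and FG: "\<And>v. F (G v) = v"
    and Gsub: "\<And>a b. G (fst a - fst b, snd a - snd b) = (fst (G a) - fst (G b), snd (G a) - snd (G b))"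
  shows "bij_betw (image F) (quot2 L) (quot2 (F ` L))"
proof -
  have memF: "z \<in> F ` L \<longleftrightarrow> G z \<in> L" for z
    by (metis FG GF image_iff)
  have cls: "relL (F ` L) `` {F v} = F ` (relL L `` {v})" for v
  proof
    show "relL (F ` L) `` {F v} \<subseteq> F ` (relL L `` {v})"
    proof
      fix w assume "w \<in> relL (F ` L) `` {F v}"
      then have "(fst (F v) - fst w, snd (F v) - snd w) \<in> F ` L" by (simp add: relL_def)
      then have "G (fst (F v) - fst w, snd (F v) - snd w) \<in> L" using memF by blast
      then have "(fst v - fst (G w), snd v - snd (G w)) \<in> L" using Gsub GF by simp
      then have "G w \<in> relL L `` {v}" by (simp add: relL_def)
      then show "w \<in> F ` (relL L `` {v})" using FG by (metis image_eqI)
    qed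
  next
    show "F ` (relL L `` {v}) \<subseteq> relL (F ` L) `` {F v}"
    proof
      fix w assume "w \<in> F ` (relL L `` {v})"
      then obtain u where u: "w = F u" "u \<in> relL L `` {v}" by blast
      then have "(fst v - fst u, snd v - snd u) \<in> L" by (simp add: relL_def)
      then have "G (fst (F v) - fst w, snd (F v) - snd w) \<in> L" using Gsub GF u(1) by simp
      then have "(fst (F v) - fst w, snd (F v) - snd w) \<in> F ` L" using memF by blast
      then show "w \<in> relL (F ` L) `` {F v}" by (simp add: relL_def)
    qed
  qed
  have injF: "inj F" by (metis GF injI)
  show ?thesis unfolding bij_betw_def
  proof
    show "inj_on (image F) (quot2 L)" using injF by (simp add: inj_on_def inj_image_eq_iff)
    show "image F ` quot2 L = quot2 (F ` L)"
    proof
      show "image F ` quot2 L \<subseteq> quot2 (F ` L)"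
      proof
        fix Y assume "Y \<in> image F ` quot2 L"
        then obtain X where X: "Y = F ` X" "X \<in> quot2 L" by blast
        then obtain v where "X = relL L `` {v}" unfolding quot2_eq by (auto elim: quotientE)
        then have "Y = relL (F ` L) `` {F v}" using X(1) cls by simp
        then show "Y \<in> quot2 (F ` L)" unfolding quot2_eq by (simp add: quotientI)
      qed
      show "quot2 (F ` L) \<subseteq> image F ` quot2 L"
      proof
        fix X assume "X \<in> quot2 (F ` L)"
        then obtain u where "X = relL (F ` L) `` {u}" unfolding quot2_eq by (auto elim: quotientE)
        then have "X = F ` (relL L `` {G u})" using cls[of "G u"] FG by simp
        then show "X \<in> image F ` quot2 L" unfolding quot2_eq by (auto intro: quotientI)
      qed
    qed
  qed
qed

lemma submod2_image:
  fixes F :: "'a \<times> 'a \<Rightarrow> 'a \<times> 'a"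
  assumes F0: "F (0, 0) = (0, 0)"
    and Fadd: "\<And>a b. F (fst a + fst b, snd a + snd b) = (fst (F a) + fst (F b), snd (F a) + snd (F b))"
    and Fsc: "\<And>c a. F (c * fst a, c * snd a) = (c * fst (F a), c * snd (F a))"
    and L: "submod2 L"
  shows "submod2 (F ` L)"
  unfolding submod2_def
proof (intro conjI ballI allI)
  show "(0, 0) \<in> F ` L" using F0 L submod2_zero by (metis image_eqI)
next
  fix x y assume "x \<in> F ` L" "y \<in> F ` L"
  then obtain a b where "x = F a" "y = F b" "a \<in> L" "b \<in> L" by blast
  moreover have "(fst a + fst b, snd a + snd b) \<in> L" using L \<open>a \<in> L\<close> \<open>b \<in> L\<close>
    unfolding submod2_def by blast
  ultimately show "(fst x + fst y, snd x + snd y) \<in> F ` L" using Fadd by (metis image_eqI)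
next
  fix c x assume "x \<in> F ` L"
  then obtain a where "x = F a" "a \<in> L" by blast
  moreover have "(c * fst a, c * snd a) \<in> L" using L \<open>a \<in> L\<close> unfolding submod2_def by blast
  ultimately show "(c * fst x, c * snd x) \<in> F ` L" using Fsc by (metis image_eqI)
qed

definition Tm :: "'a \<Rightarrow> 'a \<times> 'a \<Rightarrow> 'a \<times> 'a" where
  "Tm i v = (fst v - i * snd v, fst v + i * snd v)"

definition Ti :: "'a \<Rightarrow> 'a \<Rightarrow> 'a \<times> 'a \<Rightarrow> 'a \<times> 'a" where
  "Ti i h v = (h * (fst v + snd v), h * i * (fst v - snd v))"

lemma TTi: assumes "i * i = -1" "2 * h = 1" shows "Tm i (Ti i h v) = v"
proof -
  obtain a b where v: "v = (a, b)" by (cases v)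
  have "h * (a + b) - i * (h * i * (a - b)) = (2 * h) * a"
    using assms(1) by (simp add: algebra_simps)
  moreover have "h * (a + b) + i * (h * i * (a - b)) = (2 * h) * b"
    using assms(1) by (simp add: algebra_simps)
  ultimately show ?thesis using assms(2) v by (simp add: Tm_def Ti_def)
qed

lemma TiT: assumes "i * i = -1" "2 * h = 1" shows "Ti i h (Tm i v) = v"
proof -
  obtain a b where v: "v = (a, b)" by (cases v)
  have "h * (a - i * b + (a + i * b)) = (2 * h) * a" by (simp add: algebra_simps)
  moreover have "h * i * (a - i * b - (a + i * b)) = (2 * h) * b * (- (i * i))" by (simp add: algebra_simps)
  ultimately show ?thesis using assms v by (simp add: Tm_def Ti_def)
qed


lemma Ti_lin: "Ti i h (0, 0) = (0, 0)"
  "Ti i h (fst a + fst b, snd a + snd b) = (fst (Ti i h a) + fst (Ti i h b), snd (Ti i h a) + snd (Ti i h b))"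
  "Ti i h (c * fst a, c * snd a) = (c * fst (Ti i h a), c * snd (Ti i h a))"
  "Ti i h (fst a - fst b, snd a - snd b) = (fst (Ti i h a) - fst (Ti i h b), snd (Ti i h a) - snd (Ti i h b))"
  by (simp_all add: Ti_def algebra_simps)

lemma Tm_lin: "Tm i (0, 0) = (0, 0)"
  "Tm i (fst a + fst b, snd a + snd b) = (fst (Tm i a) + fst (Tm i b), snd (Tm i a) + snd (Tm i b))"
  "Tm i (c * fst a, c * snd a) = (c * fst (Tm i a), c * snd (Tm i a))"
  "Tm i (fst a - fst b, snd a - snd b) = (fst (Tm i a) - fst (Tm i b), snd (Tm i a) - snd (Tm i b))"
  by (simp_all add: Tm_def algebra_simps)

lemma index_Ti: assumes "i * i = -1" "2 * h = 1"
  shows "index2 (Ti i h ` L) = index2 L" "finite (quot2 (Ti i h ` L)) \<longleftrightarrow> finite (quot2 L)"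
proof -
  have b: "bij_betw (image (Ti i h)) (quot2 L) (quot2 (Ti i h ` L))"
    by (rule quot2_transport[where F = "Ti i h" and G = "Tm i"]) (use TTi[OF assms] TiT[OF assms] Tm_lin(4) in auto)
  show "index2 (Ti i h ` L) = index2 L" unfolding index2_def using bij_betw_same_card[OF b] by simp
  show "finite (quot2 (Ti i h ` L)) \<longleftrightarrow> finite (quot2 L)" using bij_betw_finite[OF b] by simp
qed

lemma index_Tm: assumes "i * i = -1" "2 * (h::'a) = 1"
  shows "finite (quot2 (Tm i ` L)) \<longleftrightarrow> finite (quot2 L)"
proof -
  have b: "bij_betw (image (Tm i)) (quot2 L) (quot2 (Tm i ` L))"
    by (rule quot2_transport[where F = "Tm i" and G = "Ti i h"]) (use TTi[OF assms] TiT[OF assms] Ti_lin(4) in auto)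
  show "finite (quot2 (Tm i ` L)) \<longleftrightarrow> finite (quot2 L)" using bij_betw_finite[OF b] by simp
qed

lemma submod_Ti: "submod2 L \<Longrightarrow> submod2 (Ti i h ` L)"
  by (rule submod2_image) (simp_all only: Ti_lin)

lemma submod_Tm: "submod2 L \<Longrightarrow> submod2 (Tm i ` L)"
  by (rule submod2_image) (simp_all only: Tm_lin)

lemma kron1:
  assumes ii: "i * i = -1" and hh: "2 * h = 1" and W: "us1 \<in> WW" "us2 \<in> WW"
  shows "(kron_f1 ` Ti i h ` lat a1 b1 us1 \<subseteq> Ti i h ` lat a2 b2 us2 \<and>
          kron_f2 ` Ti i h ` lat a1 b1 us1 \<subseteq> Ti i h ` lat a2 b2 us2) \<longleftrightarrow>
         (a2 + length us2 \<le> a1 \<and> b2 + length us2 \<le> b1)"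
proof -
  let ?M1 = "lat a1 b1 us1" and ?M2 = "lat a2 b2 us2"
  define D where "D u = (i * fst u, - (i * snd u))" for u :: "'a \<times> 'a"
  have memTi: "z \<in> Ti i h ` M \<longleftrightarrow> Tm i z \<in> M" for z M
    by (metis TTi[OF ii hh] TiT[OF ii hh] image_iff)
  have TJ: "Tm i (kron_f2 (Ti i h u)) = D u" for u
  proof -
    obtain a b where u: "u = (a, b)" by (cases u)
    have "h * i * (a - b) + i * (h * (a + b)) = (2 * h) * i * a" by (simp add: algebra_simps)
    moreover have "h * i * (a - b) - i * (h * (a + b)) = - ((2 * h) * i * b)" by (simp add: algebra_simps)
    ultimately show ?thesis using hh u by (simp add: Tm_def Ti_def kron_f2_def D_def)
  qed
  have injTi: "inj (Ti i h)" using TTi[OF ii hh] by (metis injI)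
  have kid: "kron_f1 ` X = X" for X :: "('a \<times> 'a) set" by (auto simp: kron_f1_def)
  have k1: "kron_f1 ` Ti i h ` ?M1 \<subseteq> Ti i h ` ?M2 \<longleftrightarrow> ?M1 \<subseteq> ?M2"
    unfolding kid using inj_image_subset_iff[OF injTi] .
  have "kron_f2 ` Ti i h ` ?M1 \<subseteq> Ti i h ` ?M2 \<longleftrightarrow> (\<forall>u\<in>?M1. kron_f2 (Ti i h u) \<in> Ti i h ` ?M2)"
    by blast
  also have "\<dots> \<longleftrightarrow> (\<forall>u\<in>?M1. D u \<in> ?M2)" by (simp only: memTi TJ)
  finally have k2: "kron_f2 ` Ti i h ` ?M1 \<subseteq> Ti i h ` ?M2 \<longleftrightarrow> (\<forall>u\<in>?M1. D u \<in> ?M2)" .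
  have L2: "submod2 ?M2" by (rule submod_lat)
  have iu: "(2 * i) dvd 1"
  proof -
    have "(2 * i) * (- (i * h)) = - (2 * h) * (i * i)" by (simp add: algebra_simps)
    also have "\<dots> = 1" using ii hh by simp
    finally show ?thesis by (metis dvdI)
  qed
  have "(?M1 \<subseteq> ?M2 \<and> (\<forall>u\<in>?M1. D u \<in> ?M2)) \<longleftrightarrow> ((p ^ a1, 0) \<in> ?M2 \<and> (0, p ^ b1) \<in> ?M2)"
  proof
    assume h: "?M1 \<subseteq> ?M2 \<and> (\<forall>u\<in>?M1. D u \<in> ?M2)"
    have g1: "(p ^ a1, p ^ b1 * rep us1) \<in> ?M1" by (rule lat_gen1)
    then have e1: "(p ^ a1, p ^ b1 * rep us1) \<in> ?M2" and e2: "(i * p ^ a1, - (i * (p ^ b1 * rep us1))) \<in> ?M2"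
      using h by (auto simp: D_def)
    have "(i * p ^ a1 + i * p ^ a1, i * (p ^ b1 * rep us1) + - (i * (p ^ b1 * rep us1))) \<in> ?M2"
      by (rule submod2_add[OF L2 submod2_smult[OF L2 e1] e2])
    moreover have "(i * p ^ a1 + i * p ^ a1, i * (p ^ b1 * rep us1) + - (i * (p ^ b1 * rep us1))) =
       ((2 * i) * p ^ a1, (2 * i) * 0)" by (simp add: algebra_simps)
    ultimately have "((2 * i) * p ^ a1, (2 * i) * 0) \<in> ?M2" by (simp only:)
    then have c1: "(p ^ a1, 0) \<in> ?M2" using unit_scale_mem[OF L2 _ iu] by blast
    obtain x where x: "(x, p ^ b1) \<in> ?M1" using lat_gen2 W(1) by blast
    then have e1: "(x, p ^ b1) \<in> ?M2" and e2: "(i * x, - (i * p ^ b1)) \<in> ?M2" using h by (auto simp: D_def)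
    have "(i * x - i * x, i * p ^ b1 - - (i * p ^ b1)) \<in> ?M2"
      by (rule submod2_diff[OF L2 submod2_smult[OF L2 e1] e2])
    moreover have "(i * x - i * x, i * p ^ b1 - - (i * p ^ b1)) = ((2 * i) * 0, (2 * i) * p ^ b1)"
      by (simp add: algebra_simps)
    ultimately have "((2 * i) * 0, (2 * i) * p ^ b1) \<in> ?M2" by (simp only:)
    then have c2: "(0, p ^ b1) \<in> ?M2" using unit_scale_mem[OF L2 _ iu] by blast
    show "(p ^ a1, 0) \<in> ?M2 \<and> (0, p ^ b1) \<in> ?M2" using c1 c2 by simp
  next
    assume h: "(p ^ a1, 0) \<in> ?M2 \<and> (0, p ^ b1) \<in> ?M2"
    have inM2: "(x, y) \<in> ?M2" if "p ^ a1 dvd x" "p ^ b1 dvd y" for x y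
      using block_mem[OF L2 _ _ that] h by blast
    have dv: "p ^ a1 dvd x \<and> p ^ b1 dvd y" if "(x, y) \<in> ?M1" for x y
      using lat_fst_dvd lat_snd_dvd that by blast
    show "?M1 \<subseteq> ?M2 \<and> (\<forall>u\<in>?M1. D u \<in> ?M2)"
    proof (intro conjI ballI subsetI)
      fix u assume "u \<in> ?M1"
      then obtain x y where u: "u = (x, y)" "(x, y) \<in> ?M1" by (metis prod.collapse)
      then show "u \<in> ?M2" using dv inM2 by blast
    next
      fix u assume "u \<in> ?M1"
      then obtain x y where u: "u = (x, y)" "(x, y) \<in> ?M1" by (metis prod.collapse)
      then have "p ^ a1 dvd i * x" "p ^ b1 dvd - (i * y)" using dv by auto
      then show "D u \<in> ?M2" using inM2 u(1) by (simp add: D_def)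
    qed
  qed
  also have "\<dots> \<longleftrightarrow> (a2 + length us2 \<le> a1 \<and> b2 + length us2 \<le> b1)"
    using lat_zero_fst[OF W(2)] lat_zero_snd by blast
  finally show ?thesis using k1 k2 by simp
qed

end

lemma has_sum_prod:
  fixes f :: "'x \<Rightarrow> complex" and g :: "'y \<Rightarrow> complex"
  assumes hf: "(f has_sum a) A" and hg: "(g has_sum b) B"
  shows "((\<lambda>(x, y). f x * g y) has_sum (a * b)) (A \<times> B)"
proof -
  have sf: "(\<lambda>x. norm (f x)) summable_on A"
    using hf summable_on_iff_abs_summable_on_complex has_sum_imp_summable by blast
  have sg: "(\<lambda>y. norm (g y)) summable_on B"
    using hg summable_on_iff_abs_summable_on_complex has_sum_imp_summable by blast
  define Sn where "Sn = infsum (\<lambda>y. norm (g y)) B"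
  have fib: "((\<lambda>y. norm (f x) * norm (g y)) has_sum (norm (f x) * Sn)) B" for x
    unfolding Sn_def using has_sum_cmult_right[OF has_sum_infsum[OF sg]] .
  have gs: "(\<lambda>x. norm (f x) * Sn) summable_on A"
    using summable_on_cmult_left[OF sf] .
  have "(\<lambda>(x, y). norm (f x) * norm (g y)) summable_on Sigma A (\<lambda>_. B)"
    by (rule summable_on_SigmaI[where g = "\<lambda>x. norm (f x) * Sn"]) (use fib gs in auto)
  then have "(\<lambda>z. norm ((\<lambda>(x, y). f x * g y) z)) summable_on A \<times> B"
    by (simp add: case_prod_unfold norm_mult)
  then have summ: "(\<lambda>(x, y). f x * g y) summable_on A \<times> B" by (rule abs_summable_summable)
  have fib2: "((\<lambda>y. f x * g y) has_sum (f x * b)) B" for x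
    using has_sum_cmult_right[OF hg] .
  have g2: "((\<lambda>x. f x * b) has_sum (a * b)) A"
    using has_sum_cmult_left[OF hf] .
  show ?thesis
    using has_sum_SigmaI[where f = "\<lambda>(x, y). f x * g y" and g = "\<lambda>x. f x * b", OF _ g2] fib2 summ
    by auto
qed

lemma has_sum_geo:
  fixes z :: complex
  assumes "norm z < 1"
  shows "((\<lambda>n. z ^ n) has_sum (1 / (1 - z))) UNIV"
proof (rule norm_summable_imp_has_sum)
  show "summable (\<lambda>n. norm (z ^ n))" using assms by (simp add: norm_power summable_geometric)
  show "(\<lambda>n. z ^ n) sums (1 / (1 - z))" using geometric_sums[OF assms] by simp
qed

lemma has_sum_group:
  fixes len :: "'x \<Rightarrow> nat" and h :: "nat \<Rightarrow> complex"
  assumes fin: "\<And>n. finite {x \<in> A. len x = n}"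
    and hs: "((\<lambda>n. of_nat (card {x \<in> A. len x = n}) * h n) has_sum S) UNIV"
  shows "((\<lambda>x. h (len x)) has_sum S) A"
proof -
  define B where "B n = {x \<in> A. len x = n}" for n
  have "(\<lambda>n. of_nat (card (B n)) * h n) summable_on UNIV"
    using has_sum_imp_summable[OF hs] unfolding B_def .
  then have sumA: "(\<lambda>n. norm (of_nat (card (B n)) * h n)) summable_on UNIV"
    by (rule summable_on_iff_abs_summable_on_complex[THEN iffD1])
  have fibn: "((\<lambda>x. norm (h n)) has_sum (of_nat (card (B n)) * norm (h n))) (B n)" for n
    using has_sum_finite[OF fin[of n], of "\<lambda>x. norm (h n)"] unfolding B_def by simp
  have "(\<lambda>n. of_nat (card (B n)) * norm (h n)) summable_on UNIV"
    using sumA by (simp add: norm_mult)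
  then have "(\<lambda>(n, x). norm (h n)) summable_on Sigma UNIV B"
    by (intro summable_on_SigmaI[where g = "\<lambda>n. of_nat (card (B n)) * norm (h n)"]) (use fibn in auto)
  then have "(\<lambda>z. norm ((\<lambda>(n, x). h n) z)) summable_on Sigma UNIV B"
    by (simp add: case_prod_unfold)
  then have summ: "(\<lambda>(n, x). h n) summable_on Sigma UNIV B" by (rule abs_summable_summable)
  have fib: "((\<lambda>x. h n) has_sum (of_nat (card (B n)) * h n)) (B n)" for n
    using has_sum_finite[OF fin[of n], of "\<lambda>x. h n"] unfolding B_def by simp
  have "((\<lambda>(n, x). h n) has_sum S) (Sigma UNIV B)"
    using has_sum_SigmaI[where f = "\<lambda>(n, x). h n", OF _ hs[folded B_def] summ] fib by auto
  moreover have "((\<lambda>(n, x). h n) has_sum S) (Sigma UNIV B) = ((\<lambda>x. h (len x)) has_sum S) A"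
    by (rule has_sum_reindex_bij_witness[where i = "\<lambda>x. (len x, x)" and j = snd])
       (auto simp: B_def)
  ultimately show ?thesis by simp
qed

context dvr begin

lemma has_sum_WW:
  fixes z :: complex
  assumes "norm (of_nat qq * z) < 1" and q2: "qq \<ge> 2"
  shows "((\<lambda>us. z ^ length us) has_sum ((1 - z) / (1 - of_nat qq * z))) WW"
proof (rule has_sum_group[OF finite_WW])
  let ?q = "of_nat qq :: complex"
  have q0: "?q \<noteq> 0" using q2 by simp
  have ne: "1 - ?q * z \<noteq> 0" using assms(1) by auto
  have g1: "((\<lambda>n. (?q * z) ^ n) has_sum (?q * z / (1 - ?q * z))) {1..}"
    using has_sum_geometric_from_1[OF assms(1)] .
  then have "((\<lambda>n. ((?q - 1) / ?q) * (?q * z) ^ n) has_sum (((?q - 1) / ?q) * (?q * z / (1 - ?q * z)))) {1..}"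
    by (rule has_sum_cmult_right)
  moreover have "((?q - 1) / ?q) * (?q * z) ^ n = of_nat (card {us \<in> WW. length us = n}) * z ^ n"
    if "n \<in> {1..}" for n
  proof -
    have "n \<noteq> 0" using that by simp
    then obtain m where m: "n = Suc m" by (cases n) auto
    have "((?q - 1) / ?q) * (?q * z) ^ n = (?q - 1) * ?q ^ m * z ^ n"
      using q0 m by (simp add: power_mult_distrib field_simps)
    moreover have "of_nat (card {us \<in> WW. length us = n}) = (?q - 1) * ?q ^ m"
      using m card_WW q2 by (simp add: of_nat_diff)
    ultimately show ?thesis by simp
  qed
  ultimately have "((\<lambda>n. of_nat (card {us \<in> WW. length us = n}) * z ^ n) has_sum
      (((?q - 1) / ?q) * (?q * z / (1 - ?q * z)))) {1..}"
    using has_sum_cong by (metis (no_types, lifting))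
  then have "((\<lambda>n. of_nat (card {us \<in> WW. length us = n}) * z ^ n) has_sum
      (of_nat (card {us \<in> WW. length us = 0}) * z ^ 0 + ((?q - 1) / ?q) * (?q * z / (1 - ?q * z)))) (insert 0 {1..})"
    by (intro has_sum_insert) auto
  moreover have "insert 0 {1..} = (UNIV :: nat set)" by auto
  moreover have "of_nat (card {us \<in> WW. length us = 0}) * z ^ 0 + ((?q - 1) / ?q) * (?q * z / (1 - ?q * z))
      = (1 - z) / (1 - ?q * z)"
    using q0 ne card_WW[of 0] by (simp add: field_simps)
  ultimately show "((\<lambda>n. of_nat (card {us \<in> WW. length us = n}) * z ^ n) has_sum ((1 - z) / (1 - ?q * z))) UNIV"
    by simp
qed

end

lemma pow_powr: "(of_nat (n ^ k) :: complex) powr z = (of_nat n powr z) ^ k"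
proof (induction k)
  case 0 show ?case by simp
next
  case (Suc k)
  have "(of_nat (n ^ Suc k) :: complex) powr z = (of_nat n * of_nat (n ^ k)) powr z" by simp
  also have "\<dots> = of_nat n powr z * of_nat (n ^ k) powr z" by (rule powr_times_real) auto
  finally show ?case using Suc by simp
qed

lemma weight: "(of_nat (n ^ k1 * n ^ k2) :: complex) powr z = (of_nat n powr z) ^ (k1 + k2)"
proof -
  have e: "n ^ k1 * n ^ k2 = n ^ (k1 + k2)" by (simp add: power_add)
  show ?thesis unfolding e by (rule pow_powr)
qed

context dvr begin

definition Fw :: "complex \<Rightarrow> ('a \<times> 'a) set \<times> ('a \<times> 'a) set \<Rightarrow> complex" where
  "Fw s = (\<lambda>(L1, L2). (of_nat (index2 L1 * index2 L2) :: complex) powr (- s))"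

lemma two_unit: assumes "odd qq" obtains h :: 'a where "2 * h = 1"
proof -
  have "(2::'a) dvd 1" using two_nondvd[OF assms] unit_iff by blast
  then obtain h :: 'a where "1 = 2 * h" by (elim dvdE)
  then show ?thesis using that by simp
qed

lemma caseA:
  assumes q: "odd qq" "qq mod 4 = 1"
    and t: "t = (of_nat qq :: complex) powr (- s)"
    and tq: "norm (of_nat qq * t) < 1" "norm t < 1" "norm (t ^ 2) < 1"
            "norm (of_nat qq * t ^ 3) < 1"
  shows "(Fw s has_sum (1 / (1 - t ^ 2) * (1 / (1 - t ^ 2) * ((1 - t ^ 3) / (1 - of_nat qq * t ^ 3) *
           (1 / (1 - t) * (1 / (1 - t) * ((1 - t) / (1 - of_nat qq * t)))))))) (kron_subreps TYPE('a))"
proof -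
  obtain i :: 'a where i: "i ^ 2 + 1 = 0" using exists_i q by blast
  then have ii: "i * i = -1" by (simp add: power2_eq_square eq_neg_iff_add_eq_0)
  obtain h :: 'a where hh: "2 * h = 1" using two_unit q(1) by blast
  have injTi: "inj (Ti i h)" using TTi[OF ii hh] by (metis injI)
  define P where "P = {((a1, b1, us1), (a2, b2, us2)). us1 \<in> WW \<and> us2 \<in> WW \<and>
      a2 + length us2 \<le> a1 \<and> b2 + length us2 \<le> b1}"
  define g where "g = (\<lambda>((a1, b1, us1), (a2, b2, us2)).
      (Ti i h ` lat a1 b1 us1, Ti i h ` lat (a2::nat) (b2::nat) us2))"
  have latK: "submod2 (Ti i h ` lat a b us) \<and> finite (quot2 (Ti i h ` lat a b us))" for a b us
    using submod_Ti[OF submod_lat] index_Ti(2)[OF ii hh] finite_quot_lat by blast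
  have bij: "bij_betw g P (kron_subreps TYPE('a))"
    unfolding bij_betw_def
  proof (intro conjI)
    show "inj_on g P"
    proof (rule inj_onI)
      fix x y assume xyP: "x \<in> P" "y \<in> P" "g x = g y"
      obtain a1 b1 us1 a2 b2 us2 where x: "x = ((a1, b1, us1), (a2, b2, us2))" by (metis prod.exhaust)
      obtain a1' b1' us1' a2' b2' us2' where y: "y = ((a1', b1', us1'), (a2', b2', us2'))" by (metis prod.exhaust)
      have W: "us1 \<in> WW" "us2 \<in> WW" "us1' \<in> WW" "us2' \<in> WW" using xyP(1,2) x y by (simp_all add: P_def)
      have e: "Ti i h ` lat a1 b1 us1 = Ti i h ` lat a1' b1' us1'" "Ti i h ` lat a2 b2 us2 = Ti i h ` lat a2' b2' us2'"
        using xyP(3) x y by (simp_all add: g_def)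
      note xy = x y
      have "lat a1 b1 us1 = lat a1' b1' us1'" "lat a2 b2 us2 = lat a2' b2' us2'"
        using e by (simp_all add: inj_image_eq_iff[OF injTi])
      then show "x = y" using lat_inj W xy by metis
    qed
  next
    show "g ` P = kron_subreps TYPE('a)"
    proof
      show "g ` P \<subseteq> kron_subreps TYPE('a)"
      proof
        fix z assume "z \<in> g ` P"
        then obtain x where xP: "x \<in> P" "z = g x" by blast
        obtain a1 b1 us1 a2 b2 us2 where x: "x = ((a1, b1, us1), (a2, b2, us2))" by (metis prod.exhaust)
        have z: "z = (Ti i h ` lat a1 b1 us1, Ti i h ` lat a2 b2 us2)" using xP x by (simp add: g_def)
        have W: "us1 \<in> WW" "us2 \<in> WW" and c: "a2 + length us2 \<le> a1" "b2 + length us2 \<le> b1"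
          using xP x by (simp_all add: P_def)
        show "z \<in> kron_subreps TYPE('a)"
          unfolding kron_subreps_def z using latK kron1[OF ii hh W] c by auto
      qed
    next
      show "kron_subreps TYPE('a) \<subseteq> g ` P"
      proof
        fix z assume "z \<in> kron_subreps TYPE('a)"
        then obtain L1 L2 where z: "z = (L1, L2)" and L: "submod2 L1" "submod2 L2" "finite (quot2 L1)"
          "finite (quot2 L2)" "kron_f1 ` L1 \<subseteq> L2" "kron_f2 ` L1 \<subseteq> L2"
          unfolding kron_subreps_def by auto
        have "submod2 (Tm i ` L1)" "finite (quot2 (Tm i ` L1))"
          using submod_Tm L index_Tm[OF ii hh] by auto
        then obtain a1 b1 us1 where l1: "us1 \<in> WW" "Tm i ` L1 = lat a1 b1 us1" using lat_exists by blast
        have "submod2 (Tm i ` L2)" "finite (quot2 (Tm i ` L2))"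
          using submod_Tm L index_Tm[OF ii hh] by auto
        then obtain a2 b2 us2 where l2: "us2 \<in> WW" "Tm i ` L2 = lat a2 b2 us2" using lat_exists by blast
        have bk: "Ti i h ` (Tm i ` L) = L" for L
          using TiT[OF ii hh] by (simp add: image_comp comp_def)
        have L1e: "L1 = Ti i h ` lat a1 b1 us1" using bk[of L1] l1 by simp
        have L2e: "L2 = Ti i h ` lat a2 b2 us2" using bk[of L2] l2 by simp
        have "a2 + length us2 \<le> a1 \<and> b2 + length us2 \<le> b1"
          using kron1[OF ii hh l1(1) l2(1), of a1 b1 a2 b2] L(5,6) L1e L2e by simp
        then have "((a1, b1, us1), (a2, b2, us2)) \<in> P" using l1 l2 by (simp add: P_def)
        moreover have "g ((a1, b1, us1), (a2, b2, us2)) = z" using z L1e L2e by (simp add: g_def)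
        ultimately show "z \<in> g ` P" by (metis image_eqI)
      qed
    qed
  qed
  define ex where "ex = (\<lambda>((a1::nat, b1::nat, us1::'a list), (a2::nat, b2::nat, us2::'a list)).
     a1 + b1 + length us1 + a2 + b2 + length us2)"
  have wt: "Fw s (g x) = t ^ ex x" if "x \<in> P" for x
  proof -
    obtain a1 b1 us1 a2 b2 us2 where x: "x = ((a1, b1, us1), (a2, b2, us2))" by (metis prod.exhaust)
    have "Fw s (g x) = (of_nat (qq ^ (a1 + b1 + length us1) * qq ^ (a2 + b2 + length us2))) powr (- s)"
      unfolding x g_def Fw_def by (simp add: index_Ti(1)[OF ii hh] index_lat)
    also have "\<dots> = t ^ ex x" unfolding weight t[symmetric] x ex_def by (simp add: add.assoc)
    finally show ?thesis .
  qed
  define V5 where "V5 = 1 / (1 - t) * ((1 - t) / (1 - of_nat qq * t))"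
  have h5: "((\<lambda>(y::nat, us1). t ^ y * t ^ length us1) has_sum V5) (UNIV \<times> WW)"
    unfolding V5_def by (rule has_sum_prod[OF has_sum_geo[OF tq(2)] has_sum_WW[OF tq(1) qq_ge2]])
  define V4 where "V4 = 1 / (1 - t) * V5"
  have h4: "((\<lambda>(x::nat, r). t ^ x * (\<lambda>(y::nat, us1). t ^ y * t ^ length us1) r) has_sum V4) (UNIV \<times> (UNIV \<times> WW))"
    unfolding V4_def by (rule has_sum_prod[OF has_sum_geo[OF tq(2)] h5])
  define V3 where "V3 = (1 - t ^ 3) / (1 - of_nat qq * t ^ 3) * V4"
  have h3: "((\<lambda>(us2, r). (t ^ 3) ^ length us2 * (\<lambda>(x::nat, r). t ^ x * (\<lambda>(y::nat, us1). t ^ y * t ^ length us1) r) r)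
     has_sum V3) (WW \<times> (UNIV \<times> (UNIV \<times> WW)))"
    unfolding V3_def by (rule has_sum_prod[OF has_sum_WW[OF tq(4) qq_ge2] h4])
  define V2 where "V2 = 1 / (1 - t ^ 2) * V3"
  have h2: "((\<lambda>(b2::nat, r). (t ^ 2) ^ b2 * (\<lambda>(us2, r). (t ^ 3) ^ length us2 * (\<lambda>(x::nat, r). t ^ x * (\<lambda>(y::nat, us1). t ^ y * t ^ length us1) r) r) r)
     has_sum V2) (UNIV \<times> (WW \<times> (UNIV \<times> (UNIV \<times> WW))))"
    unfolding V2_def by (rule has_sum_prod[OF has_sum_geo[OF tq(3)] h3])
  define V1 where "V1 = 1 / (1 - t ^ 2) * V2"
  define G where "G = (\<lambda>(a2::nat, r). (t ^ 2) ^ a2 * (\<lambda>(b2::nat, r). (t ^ 2) ^ b2 * (\<lambda>(us2::'a list, r). (t ^ 3) ^ length us2 * (\<lambda>(x::nat, r). t ^ x * (\<lambda>(y::nat, us1::'a list). t ^ y * t ^ length us1) r) r) r) r)"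
  define Q where "Q = (UNIV :: nat set) \<times> ((UNIV :: nat set) \<times> (WW \<times> ((UNIV :: nat set) \<times> ((UNIV :: nat set) \<times> WW))))"
  have h1: "(G has_sum V1) Q"
    unfolding V1_def G_def Q_def by (rule has_sum_prod[OF has_sum_geo[OF tq(3)] h2])
  define jm where "jm = (\<lambda>(a2::nat, b2::nat, us2::'a list, x::nat, y::nat, us1::'a list).
      ((a2 + length us2 + x, b2 + length us2 + y, us1), (a2, b2, us2)))"
  define im where "im = (\<lambda>((a1::nat, b1::nat, us1::'a list), (a2::nat, b2::nat, us2::'a list)).
      (a2, b2, us2, a1 - a2 - length us2, b1 - b2 - length us2, us1))"
  have "(G has_sum V1) Q = ((\<lambda>x. t ^ ex x) has_sum V1) P"
  proof (rule has_sum_reindex_bij_witness[where i = im and j = jm])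
    fix a assume "a \<in> Q"
    then obtain a2 b2 us2 x y us1 where a: "a = (a2, b2, us2, x, y, us1)" "us1 \<in> WW" "us2 \<in> WW"
      unfolding Q_def by auto
    show "im (jm a) = a" unfolding a im_def jm_def by simp
    show "jm a \<in> P" unfolding a jm_def P_def using a by simp
    show "t ^ ex (jm a) = G a" unfolding a jm_def ex_def G_def
      apply (simp only: prod.case power_mult[symmetric] power_add[symmetric])
      apply (rule arg_cong[where f = "\<lambda>n. t ^ n"])
      by simp
  next
    fix b assume "b \<in> P"
    then obtain a1 b1 us1 a2 b2 us2 where b: "b = ((a1, b1, us1), (a2, b2, us2))" "us1 \<in> WW" "us2 \<in> WW"
      "a2 + length us2 \<le> a1" "b2 + length us2 \<le> b1" unfolding P_def by auto
    show "jm (im b) = b" unfolding b im_def jm_def using b by simp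
    show "im b \<in> Q" unfolding b im_def Q_def using b by simp
  qed simp
  then have "((\<lambda>x. t ^ ex x) has_sum V1) P" using h1 by simp
  moreover have "((\<lambda>x. Fw s (g x)) has_sum V1) P \<longleftrightarrow> ((\<lambda>x. t ^ ex x) has_sum V1) P"
    by (rule has_sum_cong) (rule wt)
  ultimately have "((\<lambda>x. Fw s (g x)) has_sum V1) P" by blast
  then have "(Fw s has_sum V1) (kron_subreps TYPE('a))" using has_sum_reindex_bij_betw[OF bij, of "Fw s" V1] by simp
  then show ?thesis unfolding V1_def V2_def V3_def V4_def V5_def .
qed


lemma caseB:
  assumes q: "odd qq" "qq mod 4 \<noteq> 1"
    and t: "t = (of_nat qq :: complex) powr (- s)"
    and tq: "norm (of_nat qq * t) < 1" "norm t < 1" "norm (t ^ 2) < 1"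
            "norm (of_nat qq * t ^ 3) < 1" "norm (t ^ 3) < 1" "norm (t ^ 4) < 1"
  shows "(Fw s has_sum ((1 + t) * ((1 + t ^ 3) * (1 / (1 - t ^ 4) * (1 / (1 - t ^ 3) *
     ((1 - t ^ 3) / (1 - of_nat qq * t ^ 3) * (1 / (1 - t ^ 2) * (1 / (1 - t) *
     ((1 - t) / (1 - of_nat qq * t)))))))))) (kron_subreps TYPE('a))"
proof -
  define P where "P = {((a1, b1, us1), (a2, b2, us2)). us1 \<in> WW \<and> us2 \<in> WW \<and>
      a2 + length us2 \<le> min a1 b1 \<and> b2 + length us2 \<le> min a1 b1}"
  define g where "g = (\<lambda>((a1, b1, us1), (a2, b2, us2)).
      (lat a1 b1 us1, lat (a2::nat) (b2::nat) us2))"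
  have bij: "bij_betw g P (kron_subreps TYPE('a))"
    unfolding bij_betw_def
  proof (intro conjI)
    show "inj_on g P"
    proof (rule inj_onI)
      fix x y assume xyP: "x \<in> P" "y \<in> P" "g x = g y"
      obtain a1 b1 us1 a2 b2 us2 where x: "x = ((a1, b1, us1), (a2, b2, us2))" by (metis prod.exhaust)
      obtain a1' b1' us1' a2' b2' us2' where y: "y = ((a1', b1', us1'), (a2', b2', us2'))" by (metis prod.exhaust)
      have W: "us1 \<in> WW" "us2 \<in> WW" "us1' \<in> WW" "us2' \<in> WW" using xyP(1,2) x y by (simp_all add: P_def)
      have e: "lat a1 b1 us1 = lat a1' b1' us1'" "lat a2 b2 us2 = lat a2' b2' us2'"
        using xyP(3) x y by (simp_all add: g_def)
      then show "x = y" using lat_inj W x y by metis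
    qed
  next
    show "g ` P = kron_subreps TYPE('a)"
    proof
      show "g ` P \<subseteq> kron_subreps TYPE('a)"
      proof
        fix z assume "z \<in> g ` P"
        then obtain x where xP: "x \<in> P" "z = g x" by blast
        obtain a1 b1 us1 a2 b2 us2 where x: "x = ((a1, b1, us1), (a2, b2, us2))" by (metis prod.exhaust)
        have z: "z = (lat a1 b1 us1, lat a2 b2 us2)" using xP x by (simp add: g_def)
        have W: "us1 \<in> WW" "us2 \<in> WW" and c: "a2 + length us2 \<le> min a1 b1" "b2 + length us2 \<le> min a1 b1"
          using xP x by (simp_all add: P_def)
        show "z \<in> kron_subreps TYPE('a)"
          unfolding kron_subreps_def z using submod_lat finite_quot_lat kron3[OF q W] c by auto
      qed
    next
      show "kron_subreps TYPE('a) \<subseteq> g ` P"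
      proof
        fix z assume "z \<in> kron_subreps TYPE('a)"
        then obtain L1 L2 where z: "z = (L1, L2)" and L: "submod2 L1" "submod2 L2" "finite (quot2 L1)"
          "finite (quot2 L2)" "kron_f1 ` L1 \<subseteq> L2" "kron_f2 ` L1 \<subseteq> L2"
          unfolding kron_subreps_def by auto
        obtain a1 b1 us1 where l1: "us1 \<in> WW" "L1 = lat a1 b1 us1" using lat_exists L by blast
        obtain a2 b2 us2 where l2: "us2 \<in> WW" "L2 = lat a2 b2 us2" using lat_exists L by blast
        have "a2 + length us2 \<le> min a1 b1 \<and> b2 + length us2 \<le> min a1 b1"
          using kron3[OF q l1(1) l2(1), of a1 b1 a2 b2] L(5,6) l1 l2 by simp
        then have "((a1, b1, us1), (a2, b2, us2)) \<in> P" using l1 l2 by (simp add: P_def)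
        moreover have "g ((a1, b1, us1), (a2, b2, us2)) = z" using z l1 l2 by (simp add: g_def)
        ultimately show "z \<in> g ` P" by (metis image_eqI)
      qed
    qed
  qed
  define ex where "ex = (\<lambda>((a1::nat, b1::nat, us1::'a list), (a2::nat, b2::nat, us2::'a list)).
     a1 + b1 + length us1 + a2 + b2 + length us2)"
  have wt: "Fw s (g x) = t ^ ex x" if "x \<in> P" for x
  proof -
    obtain a1 b1 us1 a2 b2 us2 where x: "x = ((a1, b1, us1), (a2, b2, us2))" by (metis prod.exhaust)
    have "Fw s (g x) = (of_nat (qq ^ (a1 + b1 + length us1) * qq ^ (a2 + b2 + length us2))) powr (- s)"
      unfolding x g_def Fw_def by (simp add: index_lat)
    also have "\<dots> = t ^ ex x" unfolding weight t[symmetric] x ex_def by (simp add: add.assoc)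
    finally show ?thesis .
  qed
  have h8: "((\<lambda>(k::nat, us1). t ^ k * t ^ length us1) has_sum (1 / (1 - t) * ((1 - t) / (1 - of_nat qq * t)))) (UNIV \<times> WW)"
    by (rule has_sum_prod[OF has_sum_geo[OF tq(2)] has_sum_WW[OF tq(1) qq_ge2]])
  have h7: "((\<lambda>(z::nat, r). (t ^ 2) ^ z * (\<lambda>(k::nat, us1). t ^ k * t ^ length us1) r) has_sum
     (1 / (1 - t ^ 2) * (1 / (1 - t) * ((1 - t) / (1 - of_nat qq * t))))) (UNIV \<times> (UNIV \<times> WW))"
    by (rule has_sum_prod[OF has_sum_geo[OF tq(3)] h8])
  have h6: "((\<lambda>(us2, r). (t ^ 3) ^ length us2 * (\<lambda>(z::nat, r). (t ^ 2) ^ z * (\<lambda>(k::nat, us1). t ^ k * t ^ length us1) r) r) has_sum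
     ((1 - t ^ 3) / (1 - of_nat qq * t ^ 3) * (1 / (1 - t ^ 2) * (1 / (1 - t) * ((1 - t) / (1 - of_nat qq * t))))))
     (WW \<times> (UNIV \<times> (UNIV \<times> WW)))"
    by (rule has_sum_prod[OF has_sum_WW[OF tq(4) qq_ge2] h7])
  have h5: "((\<lambda>(jj::nat, r). (t ^ 3) ^ jj * (\<lambda>(us2, r). (t ^ 3) ^ length us2 * (\<lambda>(z::nat, r). (t ^ 2) ^ z * (\<lambda>(k::nat, us1). t ^ k * t ^ length us1) r) r) r) has_sum
     (1 / (1 - t ^ 3) * ((1 - t ^ 3) / (1 - of_nat qq * t ^ 3) * (1 / (1 - t ^ 2) * (1 / (1 - t) * ((1 - t) / (1 - of_nat qq * t)))))))
     (UNIV \<times> (WW \<times> (UNIV \<times> (UNIV \<times> WW))))"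
    by (rule has_sum_prod[OF has_sum_geo[OF tq(5)] h6])
  have h4: "((\<lambda>(a::nat, r). (t ^ 4) ^ a * (\<lambda>(jj::nat, r). (t ^ 3) ^ jj * (\<lambda>(us2, r). (t ^ 3) ^ length us2 * (\<lambda>(z::nat, r). (t ^ 2) ^ z * (\<lambda>(k::nat, us1). t ^ k * t ^ length us1) r) r) r) r) has_sum
     (1 / (1 - t ^ 4) * (1 / (1 - t ^ 3) * ((1 - t ^ 3) / (1 - of_nat qq * t ^ 3) * (1 / (1 - t ^ 2) * (1 / (1 - t) * ((1 - t) / (1 - of_nat qq * t))))))))
     (UNIV \<times> (UNIV \<times> (WW \<times> (UNIV \<times> (UNIV \<times> WW)))))"
    by (rule has_sum_prod[OF has_sum_geo[OF tq(6)] h5])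
  have f2: "((\<lambda>s2::nat. (t ^ 3) ^ s2) has_sum (1 + t ^ 3)) {0, 1}"
    using has_sum_finite[of "{0::nat, 1}" "\<lambda>s2. (t ^ 3) ^ s2"] by simp
  have f1: "((\<lambda>s1::nat. t ^ s1) has_sum (1 + t)) {0, 1}"
    using has_sum_finite[of "{0::nat, 1}" "\<lambda>s1. t ^ s1"] by simp
  note h3 = has_sum_prod[OF f2 h4]
  note h2 = has_sum_prod[OF f1 h3]
  define G where "G = (\<lambda>(s1::nat, r). t ^ s1 * (\<lambda>(s2::nat, r). (t ^ 3) ^ s2 * (\<lambda>(a::nat, r). (t ^ 4) ^ a * (\<lambda>(jj::nat, r). (t ^ 3) ^ jj * (\<lambda>(us2::'a list, r). (t ^ 3) ^ length us2 * (\<lambda>(z::nat, r). (t ^ 2) ^ z * (\<lambda>(k::nat, us1::'a list). t ^ k * t ^ length us1) r) r) r) r) r) r)"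
  define Q where "Q = {0::nat, 1} \<times> ({0::nat, 1} \<times> ((UNIV :: nat set) \<times> ((UNIV :: nat set) \<times> (WW \<times> ((UNIV :: nat set) \<times> ((UNIV :: nat set) \<times> WW))))))"
  define V where "V = (1 + t) * ((1 + t ^ 3) * (1 / (1 - t ^ 4) * (1 / (1 - t ^ 3) *
     ((1 - t ^ 3) / (1 - of_nat qq * t ^ 3) * (1 / (1 - t ^ 2) * (1 / (1 - t) *
     ((1 - t) / (1 - of_nat qq * t))))))))"
  have h1: "(G has_sum V) Q" unfolding G_def Q_def V_def using h2 .
  define jm where "jm = (\<lambda>(s1::nat, s2::nat, a::nat, jj::nat, us2::'a list, z::nat, k::nat, us1::'a list).
      ((if s1 = 0 then a + jj + s2 + length us2 + z else a + jj + s2 + length us2 + z + k + 1,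
        if s1 = 0 then a + jj + s2 + length us2 + z + k else a + jj + s2 + length us2 + z, us1),
       (if s2 = 0 then a else a + jj + 1, if s2 = 0 then a + jj else a, us2)))"
  define im where "im = (\<lambda>((a1::nat, b1::nat, us1::'a list), (a2::nat, b2::nat, us2::'a list)).
      (if a1 \<le> b1 then 0::nat else 1, if a2 \<le> b2 then 0::nat else 1, min a2 b2,
       if a2 \<le> b2 then b2 - a2 else a2 - b2 - 1, us2, min a1 b1 - max a2 b2 - length us2,
       if a1 \<le> b1 then b1 - a1 else a1 - b1 - 1, us1))"
  have "(G has_sum V) Q = ((\<lambda>x. t ^ ex x) has_sum V) P"
  proof (rule has_sum_reindex_bij_witness[where i = im and j = jm])
    fix a assume "a \<in> Q"
    then obtain s1 s2 aa jj us2 z k us1 where a: "a = (s1, s2, aa, jj, us2, z, k, us1)" "us1 \<in> WW" "us2 \<in> WW"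
      "s1 = 0 \<or> s1 = 1" "s2 = 0 \<or> s2 = 1"
      unfolding Q_def by auto
    show "im (jm a) = a" unfolding a(1) im_def jm_def using a(4,5) by auto
    show "jm a \<in> P" unfolding a(1) jm_def P_def using a by auto
    show "t ^ ex (jm a) = G a" unfolding a(1) jm_def ex_def G_def
      apply (simp only: prod.case power_mult[symmetric] power_add[symmetric])
      apply (rule arg_cong[where f = "\<lambda>n. t ^ n"])
      using a(4,5) by auto
  next
    fix b assume "b \<in> P"
    then obtain a1 b1 us1 a2 b2 us2 where b: "b = ((a1, b1, us1), (a2, b2, us2))" "us1 \<in> WW" "us2 \<in> WW"
      "a2 + length us2 \<le> min a1 b1" "b2 + length us2 \<le> min a1 b1" unfolding P_def by auto
    show "jm (im b) = b" unfolding b(1) im_def jm_def using b(4,5) by auto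
    show "im b \<in> Q" unfolding b(1) im_def Q_def using b by simp
  qed simp
  then have "((\<lambda>x. t ^ ex x) has_sum V) P" using h1 by simp
  moreover have "((\<lambda>x. Fw s (g x)) has_sum V) P \<longleftrightarrow> ((\<lambda>x. t ^ ex x) has_sum V) P"
    by (rule has_sum_cong) (rule wt)
  ultimately have "((\<lambda>x. Fw s (g x)) has_sum V) P" by blast
  then have "(Fw s has_sum V) (kron_subreps TYPE('a))" using has_sum_reindex_bij_betw[OF bij, of "Fw s" V] by simp
  then show ?thesis unfolding V_def .
qed

end

lemma nz1: "norm (z::complex) < 1 \<Longrightarrow> 1 - z \<noteq> 0" by auto
lemma nz2: "norm (z::complex) < 1 \<Longrightarrow> 1 + z \<noteq> 0"
  by (metis add.inverse_unique norm_minus_cancel norm_one order_less_irrefl)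

lemma algA:
  fixes t q :: complex
  assumes "norm t < 1" "norm (t ^ 2) < 1" "norm (q * t) < 1" "norm (q * t ^ 3) < 1"
  shows "1 / (1 - t ^ 2) * (1 / (1 - t ^ 2) * ((1 - t ^ 3) / (1 - q * t ^ 3) *
           (1 / (1 - t) * (1 / (1 - t) * ((1 - t) / (1 - q * t)))))) =
         (1 + t^2) * (1 - t^3) / ((1 - t) * (1 - t^2) * (1 - t^4) * (1 - q * t) * (1 - q * t^3))"
proof -
  have a: "1 - t \<noteq> 0" "1 - t ^ 2 \<noteq> 0" "1 + t ^ 2 \<noteq> 0" "1 - q * t \<noteq> 0" "1 - q * t ^ 3 \<noteq> 0"
    using assms nz1 nz2 by auto
  have e: "1 - t ^ 4 = (1 - t ^ 2) * (1 + t ^ 2)" by (simp add: algebra_simps power2_eq_square power4_eq_xxxx)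
  have abs: "1 / b * (1 / b * (n / e * (1 / a * (1 / a * (a / d))))) = c * n / (a * b * (b * c) * d * e)"
    if "a \<noteq> 0" "b \<noteq> 0" "c \<noteq> 0" "d \<noteq> 0" "e \<noteq> 0" for a b c d e n :: complex
    using that by (simp add: field_simps)
  show ?thesis unfolding e using abs[OF a(1,2,3,4,5), of "1 - t ^ 3"] by (simp add: mult.assoc)
qed

lemma algB:
  fixes t q :: complex
  assumes "norm t < 1" "norm (t ^ 2) < 1" "norm (t ^ 3) < 1" "norm (t ^ 4) < 1"
    "norm (q * t) < 1" "norm (q * t ^ 3) < 1"
  shows "(1 + t) * ((1 + t ^ 3) * (1 / (1 - t ^ 4) * (1 / (1 - t ^ 3) *
     ((1 - t ^ 3) / (1 - q * t ^ 3) * (1 / (1 - t ^ 2) * (1 / (1 - t) *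
     ((1 - t) / (1 - q * t)))))))) =
     (1 + t^3) / ((1 - t) * (1 - t^4) * (1 - q * t) * (1 - q * t^3))"
proof -
  have a: "1 - t \<noteq> 0" "1 - t ^ 2 \<noteq> 0" "1 - t ^ 3 \<noteq> 0" "1 - t ^ 4 \<noteq> 0" "1 - q * t \<noteq> 0" "1 - q * t ^ 3 \<noteq> 0"
    using assms nz1 by auto
  have e: "1 - t ^ 2 = (1 - t) * (1 + t)" by (simp add: algebra_simps power2_eq_square)
  have "1 + t \<noteq> 0" using assms(1) nz2 by auto
  have abs: "u * (m * (1 / f * (1 / n * (n / e * (1 / (a * u) * (1 / a * (a / d))))))) = m / (a * f * d * e)"
    if "a \<noteq> 0" "u \<noteq> 0" "f \<noteq> 0" "n \<noteq> 0" "d \<noteq> 0" "e \<noteq> 0" for a u f n d e m :: complex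
    using that by (simp add: field_simps)
  show ?thesis unfolding e using abs[OF a(1) \<open>1 + t \<noteq> 0\<close> a(4,3,5,6), of "1 + t ^ 3"] by (simp add: mult.assoc)
qed

context dvr begin

lemma main_dvr:
  assumes q: "odd qq" and s: "Re s > 1"
  defines "t \<equiv> (of_nat qq :: complex) powr (- s)"
  shows "(Fw s has_sum
           (if qq mod 4 = 1
            then (1 + t^2) * (1 - t^3) /
                 ((1 - t) * (1 - t^2) * (1 - t^4) * (1 - of_nat qq * t) * (1 - of_nat qq * t^3))
            else (1 + t^3) /
                 ((1 - t) * (1 - t^4) * (1 - of_nat qq * t) * (1 - of_nat qq * t^3))))
         (kron_subreps TYPE('a))"
proof -
  have q2: "real qq \<ge> 2" using qq_ge2 by simp
  have nt: "norm t = real qq powr (- Re s)" unfolding t_def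
    by (subst norm_powr_real_powr) auto
  have "real qq powr (- Re s) < real qq powr (-1)"
    by (rule powr_less_mono) (use s q2 in auto)
  then have nt1: "norm t < 1 / real qq" using nt q2 by (simp add: powr_neg_one)
  have nt0: "0 \<le> norm t" by simp
  have ntq: "real qq * norm t < 1" using nt1 q2 by (simp add: field_simps)
  have ntl: "norm t < 1" using nt1 q2 by (smt (verit) divide_le_eq_1_pos)
  have pw: "norm t ^ k \<le> norm t" if "k \<ge> 1" for k
    using power_decreasing[of 1 k "norm t"] that ntl nt0 by simp
  have tq: "norm (of_nat qq * t) < 1" using ntq by (simp add: norm_mult)
  have t2: "norm (t ^ 2) < 1" "norm (t ^ 3) < 1" "norm (t ^ 4) < 1"
    using pw[of 2] pw[of 3] pw[of 4] ntl by (auto simp: norm_power)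
  have "real qq * norm t ^ 3 \<le> real qq * norm t" using pw[of 3] by (intro mult_left_mono) auto
  then have tq3: "norm (of_nat qq * t ^ 3) < 1" using ntq by (simp add: norm_mult norm_power)
  show ?thesis
  proof (cases "qq mod 4 = 1")
    case True
    show ?thesis using caseA[OF q True t_def[THEN meta_eq_to_obj_eq] tq ntl t2(1) tq3] algA[OF ntl t2(1) tq tq3] True by simp
  next
    case False
    show ?thesis using caseB[OF q False t_def[THEN meta_eq_to_obj_eq] tq ntl t2(1) tq3 t2(2,3)] algB[OF ntl t2 tq tq3] False by simp
  qed
qed

end

theorem proposition3p13:
  fixes s :: complex and q :: nat
  assumes "compact_dvr TYPE('a::idom)"
    and "residue_card TYPE('a) = q"
    and "odd q"
    and "Re s > 1"
  defines "t \<equiv> (of_nat q :: complex) powr (- s)"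
  shows "((\<lambda>(L1, L2). (of_nat (index2 L1 * index2 L2) :: complex) powr (- s))
           has_sum
           (if q mod 4 = 1
            then (1 + t^2) * (1 - t^3) /
                 ((1 - t) * (1 - t^2) * (1 - t^4) * (1 - of_nat q * t) * (1 - of_nat q * t^3))
            else (1 + t^3) /
                 ((1 - t) * (1 - t^4) * (1 - of_nat q * t) * (1 - of_nat q * t^3))))
         (kron_subreps TYPE('a))"
proof -
  obtain p :: 'a where p: "dvr_uniformizer p"
    "\<forall>x::nat \<Rightarrow> 'a. (\<forall>n. p ^ n dvd (x (Suc n) - x n)) \<longrightarrow> (\<exists>y. \<forall>n. p ^ n dvd (y - x n))"
    and fin: "finite (residue_field TYPE('a))"
    using assms(1) unfolding compact_dvr_def by blast
  interpret D: dvr p using p fin by unfold_locales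
  have qq: "D.qq = q" using assms(2) by (simp add: D.qq_def residue_card_def)
  have "(D.Fw s has_sum
           (if D.qq mod 4 = 1
            then (1 + t^2) * (1 - t^3) /
                 ((1 - t) * (1 - t^2) * (1 - t^4) * (1 - of_nat D.qq * t) * (1 - of_nat D.qq * t^3))
            else (1 + t^3) /
                 ((1 - t) * (1 - t^4) * (1 - of_nat D.qq * t) * (1 - of_nat D.qq * t^3))))
         (kron_subreps TYPE('a))"
    unfolding t_def qq[symmetric] using D.main_dvr[of s] assms(3,4) qq by simp
  then show ?thesis unfolding D.Fw_def qq .
qed

end
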